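(* There exists an online DTAP scheduler on $p$ processors that is $O(\sqrt{p})$-competitive for awake time: for every DTAP $\mathcal{D}$, its awake time on $\mathcal{D}$ is at most $C\sqrt{p}$ times the optimal offline awake time on $\mathcal{D}$, for an absolute constant $C$.
   Context: Serial-parallel scheduling with dependencies: $p$ identical processors. A DTAP is a finite set of tasks $\tau_1,\dots,\tau_n$, each specified by serial work $\sigma_i$, parallel work $\pi_i$ with $1\le\pi_i/\sigma_i\le p$, a time $t_i\ge0$, and a set $D_i\subseteq[n]$ of tasks it depends on; the dependency structure is acyclic. Task $\tau_i$ becomes available only at a time $t>t_i$ at which all tasks in $D_i$ have completed. A task is performed either by its serial job (work $\sigma_i$, at most one processor at any instant) or its parallel job (work $\pi_i$, any number of processors, rate equal to number of processors); the choice is irrevocable once started; time is continuous, allocations may be fractional, preemption allowed. A task is alive when available and not yet completed; the awake time is the measure of the set of times at which some task is alive. An online scheduler knows nothing about task $\tau_i$ until it becomes available. The optimal offline schedule knows the entire DTAP in advance. *)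

theory Defs
  imports "HOL-Analysis.Analysis"
begin

text \<open>A task: serial work, parallel work, release time, and the set of (indices of)
  tasks it depends on. A DTAP is a list of tasks; task i is the i-th entry.\<close>
record task =
  ser_work :: real
  par_work :: real
  release :: real
  deps :: "nat set"

definition valid_dtap :: "nat \<Rightarrow> task list \<Rightarrow> bool" where
  "valid_dtap p D \<longleftrightarrow>
     (\<forall>i < length D.
        0 < ser_work (D!i) \<and>
        1 \<le> par_work (D!i) / ser_work (D!i) \<and>
        par_work (D!i) / ser_work (D!i) \<le> real p \<and>
        0 \<le> release (D!i) \<and>
        deps (D!i) \<subseteq> {..<length D}) \<and>
     acyclic {(j, i). i < length D \<and> j \<in> deps (D!i)}"

record sched =
  srate :: "nat \<Rightarrow> real \<Rightarrow> real"
  prate :: "nat \<Rightarrow> real \<Rightarrow> real"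
  compl :: "nat \<Rightarrow> real"

definition completes_at :: "(real \<Rightarrow> real) \<Rightarrow> real \<Rightarrow> real \<Rightarrow> bool" where
  "completes_at r w c \<longleftrightarrow> integral {0..c} r = w \<and> (\<forall>s < c. integral {0..s} r < w)"

definition available :: "task list \<Rightarrow> sched \<Rightarrow> nat \<Rightarrow> real \<Rightarrow> bool" where
  "available D S i t \<longleftrightarrow> release (D!i) < t \<and> (\<forall>j \<in> deps (D!i). compl S j \<le> t)"

definition alive :: "task list \<Rightarrow> sched \<Rightarrow> nat \<Rightarrow> real \<Rightarrow> bool" where
  "alive D S i t \<longleftrightarrow> available D S i t \<and> t < compl S i"

definition valid_sched :: "nat \<Rightarrow> task list \<Rightarrow> sched \<Rightarrow> bool" where
  "valid_sched p D S \<longleftrightarrow>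
     (\<forall>i < length D.
        (\<forall>t. 0 \<le> srate S i t \<and> srate S i t \<le> 1 \<and> 0 \<le> prate S i t) \<and>
        (\<forall>T. srate S i integrable_on {0..T} \<and> prate S i integrable_on {0..T}) \<and>
        (\<forall>t. srate S i t + prate S i t > 0 \<longrightarrow> available D S i t) \<and>
        (((\<forall>t. prate S i t = 0) \<and> completes_at (srate S i) (ser_work (D!i)) (compl S i)) \<or>
         ((\<forall>t. srate S i t = 0) \<and> completes_at (prate S i) (par_work (D!i)) (compl S i)))) \<and>
     (\<forall>t. (\<Sum>i < length D. srate S i t + prate S i t) \<le> real p)"

definition awake_time :: "task list \<Rightarrow> sched \<Rightarrow> real" where
  "awake_time D S = measure lebesgue {t. \<exists>i < length D. alive D S i t}"

definition avail_time :: "task list \<Rightarrow> sched \<Rightarrow> nat \<Rightarrow> real" where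
  "avail_time D S i = Max (insert (release (D!i)) (compl S ` deps (D!i)))"

text \<open>Tasks that have become available strictly before time t (i.e. those revealed to
  an online scheduler by time t).\<close>
definition known :: "task list \<Rightarrow> sched \<Rightarrow> real \<Rightarrow> nat set" where
  "known D S t = {i. i < length D \<and> release (D!i) < t \<and> (\<forall>j \<in> deps (D!i). compl S j < t)}"

text \<open>Online (non-anticipative) scheduler: its behaviour on the time interval [0,t] depends
  only on the tasks revealed before t (their parameters, dependencies and revelation
  times), up to renaming of tasks; not on the number or identity of other tasks.\<close>
definition online :: "nat \<Rightarrow> (task list \<Rightarrow> sched) \<Rightarrow> bool" where
  "online p A \<longleftrightarrow>
     (\<forall>D D' t f.
        valid_dtap p D \<and> valid_dtap p D' \<and>
        bij_betw f (known D (A D) t) (known D' (A D') t) \<and>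
        (\<forall>i \<in> known D (A D) t.
           ser_work (D'!f i) = ser_work (D!i) \<and>
           par_work (D'!f i) = par_work (D!i) \<and>
           release (D'!f i) = release (D!i) \<and>
           deps (D'!f i) = f ` deps (D!i) \<and>
           avail_time D' (A D') (f i) = avail_time D (A D) i)
        \<longrightarrow> (\<forall>i \<in> known D (A D) t. \<forall>s \<le> t.
               srate (A D') (f i) s = srate (A D) i s \<and>
               prate (A D') (f i) s = prate (A D) i s))"

end

theory Submission
  imports Defs
begin


lemma bm_lebesgue_on:
  fixes f :: "real \<Rightarrow> real"
  assumes "f \<in> borel_measurable borel"
  shows "f \<in> borel_measurable (lebesgue_on S)"
proof -
  have "f \<in> borel_measurable lborel" using assms by simp
  then have "f \<in> borel_measurable lebesgue" by (rule measurable_completion)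
  then show ?thesis by (rule measurable_restrict_space1)
qed

lemma bm_integrable:
  fixes f :: "real \<Rightarrow> real"
  assumes "f \<in> borel_measurable borel" "\<And>x. \<bar>f x\<bar> \<le> B"
  shows "f integrable_on {a..b}"
proof (rule measurable_bounded_by_integrable_imp_integrable[where g="\<lambda>_. B"])
  show "f \<in> borel_measurable (lebesgue_on {a..b})"
    using assms(1) by (rule bm_lebesgue_on)
  show "(\<lambda>_. B) integrable_on {a..b}" by (rule integrable_on_const) auto
qed (use assms in auto)

definition isser :: "nat \<Rightarrow> task list \<Rightarrow> nat \<Rightarrow> bool" where
  "isser p D i \<longleftrightarrow> sqrt (real p) * ser_work (D!i) \<le> par_work (D!i)"

definition wk :: "nat \<Rightarrow> task list \<Rightarrow> nat \<Rightarrow> real" where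
  "wk p D i = (if isser p D i then ser_work (D!i) else par_work (D!i))"

definition av :: "task list \<Rightarrow> (nat \<Rightarrow> real) \<Rightarrow> nat \<Rightarrow> real" where
  "av D c i = Max (insert (release (D!i)) (c ` deps (D!i)))"

definition act :: "task list \<Rightarrow> (nat \<Rightarrow> real) \<Rightarrow> nat \<Rightarrow> real \<Rightarrow> bool" where
  "act D c i s \<longleftrightarrow> i < length D \<and> av D c i < s \<and> s < c i"

definition nser :: "nat \<Rightarrow> task list \<Rightarrow> (nat \<Rightarrow> real) \<Rightarrow> real \<Rightarrow> real" where
  "nser p D c s = (\<Sum>j<length D. if act D c j s \<and> isser p D j then 1 else 0)"

definition npar :: "nat \<Rightarrow> task list \<Rightarrow> (nat \<Rightarrow> real) \<Rightarrow> real \<Rightarrow> real" where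
  "npar p D c s = (\<Sum>j<length D. if act D c j s \<and> \<not> isser p D j then 1 else 0)"

definition rt :: "nat \<Rightarrow> task list \<Rightarrow> (nat \<Rightarrow> real) \<Rightarrow> nat \<Rightarrow> real \<Rightarrow> real" where
  "rt p D c i s = (if act D c i s then
      (if isser p D i then min 1 (real p / nser p D c s)
       else (real p - min (nser p D c s) (real p)) / npar p D c s) else 0)"

definition tot :: "nat \<Rightarrow> task list \<Rightarrow> (nat \<Rightarrow> real) \<Rightarrow> real \<Rightarrow> real" where
  "tot p D c s = (\<Sum>i<length D. rt p D c i s)"

lemma rt_meas: "rt p D c i \<in> borel_measurable borel"
  unfolding rt_def nser_def npar_def act_def
  by measurable

lemma nser_nonneg: "0 \<le> nser p D c s"
  unfolding nser_def by (rule sum_nonneg) auto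

lemma npar_nonneg: "0 \<le> npar p D c s"
  unfolding npar_def by (rule sum_nonneg) auto

lemma nser_ge1: "act D c i s \<Longrightarrow> isser p D i \<Longrightarrow> 1 \<le> nser p D c s"
  unfolding nser_def
proof -
  assume a: "act D c i s" "isser p D i"
  then have i: "i < length D" by (simp add: act_def)
  have "(\<Sum>j\<in>{i}. (if act D c j s \<and> isser p D j then 1 else 0::real))
     \<le> (\<Sum>j<length D. if act D c j s \<and> isser p D j then 1 else 0)"
    by (rule sum_mono2) (use i in auto)
  then show "1 \<le> (\<Sum>j<length D. if act D c j s \<and> isser p D j then 1 else 0::real)"
    using a by simp
qed

lemma npar_ge1: "act D c i s \<Longrightarrow> \<not> isser p D i \<Longrightarrow> 1 \<le> npar p D c s"
  unfolding npar_def
proof -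
  assume a: "act D c i s" "\<not> isser p D i"
  then have i: "i < length D" by (simp add: act_def)
  have "(\<Sum>j\<in>{i}. (if act D c j s \<and> \<not> isser p D j then 1 else 0::real))
     \<le> (\<Sum>j<length D. if act D c j s \<and> \<not> isser p D j then 1 else 0)"
    by (rule sum_mono2) (use i in auto)
  then show "1 \<le> (\<Sum>j<length D. if act D c j s \<and> \<not> isser p D j then 1 else 0::real)"
    using a by simp
qed

lemma rt_nonneg: "0 \<le> rt p D c i s"
  unfolding rt_def using nser_nonneg[of p D c s] npar_nonneg[of p D c s]
  by (auto intro!: divide_nonneg_nonneg)

lemma rt_ser_le1: "isser p D i \<Longrightarrow> rt p D c i s \<le> 1"
  unfolding rt_def by auto

lemma rt_pos_act: "0 < rt p D c i s \<Longrightarrow> act D c i s"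
  unfolding rt_def by (auto split: if_splits)

lemma tot_eq: "tot p D c s = min (nser p D c s) (real p) +
   (if npar p D c s > 0 then real p - min (nser p D c s) (real p) else 0)"
proof -
  define ns where "ns = nser p D c s"
  define np where "np = npar p D c s"
  define k1 where "k1 = min 1 (real p / ns)"
  define k2 where "k2 = (real p - min ns (real p)) / np"
  have "tot p D c s = (\<Sum>i<length D. (if act D c i s \<and> isser p D i then 1 else 0) * k1
      + (if act D c i s \<and> \<not> isser p D i then 1 else 0) * k2)"
    unfolding tot_def rt_def ns_def np_def k1_def k2_def by (rule sum.cong) auto
  also have "\<dots> = ns * k1 + np * k2"
    unfolding ns_def np_def nser_def npar_def
    by (simp add: sum.distrib sum_distrib_right)
  also have "ns * k1 + np * k2 = ns * min 1 (real p / ns) + np * ((real p - min ns (real p)) / np)"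
    unfolding k1_def k2_def ..
  also have "ns * min 1 (real p / ns) = min ns (real p)"
    using nser_nonneg[of p D c s] unfolding ns_def[symmetric]
    by (cases "ns = 0") (auto simp: min_def field_simps)
  also have "np * ((real p - min ns (real p)) / np) = (if np > 0 then real p - min ns (real p) else 0)"
    using npar_nonneg[of p D c s] unfolding np_def[symmetric] by auto
  finally show ?thesis unfolding ns_def np_def .
qed

lemma tot_le: "tot p D c s \<le> real p"
  unfolding tot_eq by auto

lemma rt_le_p: "i < length D \<Longrightarrow> rt p D c i s \<le> real p"
proof -
  assume i: "i < length D"
  have "rt p D c i s = (\<Sum>j\<in>{i}. rt p D c j s)" by simp
  also have "\<dots> \<le> tot p D c s" unfolding tot_def
    by (rule sum_mono2) (use i rt_nonneg in auto)
  finally show ?thesis using tot_le[of p D c s] by simp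
qed

lemma busy_or_full:
  assumes "tot p D c s < real p" "act D c i s"
  shows "isser p D i \<and> rt p D c i s = 1"
proof -
  have np: "\<not> npar p D c s > 0" using assms(1) unfolding tot_eq by (auto split: if_splits)
  then have "isser p D i" using npar_ge1[OF assms(2)] by force
  moreover have "nser p D c s < real p" using assms(1) np unfolding tot_eq by (auto simp: min_def split: if_splits)
  moreover have "1 \<le> nser p D c s" using nser_ge1[OF assms(2)] calculation(1) by auto
  ultimately have "1 \<le> real p / nser p D c s" by (simp add: le_divide_eq)
  then show ?thesis using assms(2) \<open>isser p D i\<close> unfolding rt_def by auto
qed

lemma rt_integrable: "rt p D c i integrable_on {a..b}"
proof (rule bm_integrable[OF rt_meas])
  fix x
  show "\<bar>rt p D c i x\<bar> \<le> real p"
  proof (cases "i < length D")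
    case True then show ?thesis using rt_nonneg rt_le_p by (metis abs_of_nonneg)
  next
    case False then show ?thesis by (simp add: rt_def act_def)
  qed
qed



definition wfD :: "task list \<Rightarrow> bool" where
  "wfD D \<longleftrightarrow> (\<forall>i<length D. deps (D!i) \<subseteq> {..<length D})"

lemma valid_wfD: "valid_dtap p D \<Longrightarrow> wfD D"
  unfolding valid_dtap_def wfD_def by auto

lemma wfD_fin: "wfD D \<Longrightarrow> i < length D \<Longrightarrow> finite (deps (D!i))"
  unfolding wfD_def by (meson finite_lessThan finite_subset)

lemma wfD_dep: "wfD D \<Longrightarrow> i < length D \<Longrightarrow> d \<in> deps (D!i) \<Longrightarrow> d < length D"
  unfolding wfD_def by auto

lemma av_ge_rel: "finite (deps (D!i)) \<Longrightarrow> release (D!i) \<le> av D c i"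
  unfolding av_def by (rule Max_ge) auto

lemma av_ge_dep: "finite (deps (D!i)) \<Longrightarrow> d \<in> deps (D!i) \<Longrightarrow> c d \<le> av D c i"
  unfolding av_def by (rule Max_ge) auto

lemma av_less_iff: "finite (deps (D!i)) \<Longrightarrow>
   av D c i < s \<longleftrightarrow> release (D!i) < s \<and> (\<forall>d\<in>deps (D!i). c d < s)"
  unfolding av_def by (subst Max_less_iff) auto

lemma av_le_iff: "finite (deps (D!i)) \<Longrightarrow>
   av D c i \<le> s \<longleftrightarrow> release (D!i) \<le> s \<and> (\<forall>d\<in>deps (D!i). c d \<le> s)"
  unfolding av_def by (subst Max_le_iff) auto

lemma av_cases: "finite (deps (D!i)) \<Longrightarrow>
   av D c i = release (D!i) \<or> (\<exists>d\<in>deps (D!i). av D c i = c d)"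
proof -
  assume f: "finite (deps (D!i))"
  have "av D c i \<in> insert (release (D!i)) (c ` deps (D!i))"
    unfolding av_def by (rule Max_in) (use f in auto)
  then show ?thesis by auto
qed

lemma act_agree:
  assumes w: "wfD D" and ag: "\<forall>j<length D. c j = c' j \<or> (T < c j \<and> T < c' j)" and s: "s \<le> T"
  shows "act D c j s = act D c' j s"
proof (cases "j < length D")
  case True
  have f: "finite (deps (D!j))" using wfD_fin[OF w True] .
  have dd: "\<forall>d\<in>deps (D!j). (c d < s) = (c' d < s)"
    using ag wfD_dep[OF w True] s by fastforce
  have "(s < c j) = (s < c' j)" using ag True s by fastforce
  then show ?thesis unfolding act_def av_less_iff[OF f] using dd by auto
qed (simp add: act_def)

lemma rt_agree:
  assumes w: "wfD D" and ag: "\<forall>j<length D. c j = c' j \<or> (T < c j \<and> T < c' j)" and s: "s \<le> T"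
  shows "rt p D c i s = rt p D c' i s"
proof -
  have a: "\<And>j. act D c j s = act D c' j s" using act_agree[OF w ag s] .
  have "nser p D c s = nser p D c' s" "npar p D c s = npar p D c' s"
    unfolding nser_def npar_def using a by auto
  then show ?thesis unfolding rt_def using a by simp
qed

lemma integral_mono_upper:
  fixes f :: "real \<Rightarrow> real"
  assumes "\<And>x. 0 \<le> f x" "\<And>a b. f integrable_on {a..b}" "s \<le> t" "0 \<le> t"
  shows "integral {0..s} f \<le> integral {0..t} f"
proof (cases "0 \<le> s")
  case True
  have "integral {0..s} f + integral {s..t} f = integral {0..t} f"
    by (rule Henstock_Kurzweil_Integration.integral_combine) (use True assms in auto)
  moreover have "0 \<le> integral {s..t} f" by (rule integral_nonneg) (use assms in auto)
  ultimately show ?thesis by linarith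
next
  case False
  then have "integral {0..s} f = 0" by simp
  moreover have "0 \<le> integral {0..t} f" by (rule integral_nonneg) (use assms in auto)
  ultimately show ?thesis by linarith
qed

lemma integral_cong_upto:
  fixes f g :: "real \<Rightarrow> real"
  assumes "\<And>x. x \<le> T \<Longrightarrow> f x = g x" "y \<le> T"
  shows "integral {0..y} f = integral {0..y} g"
  by (rule integral_cong) (use assms in auto)



definition PS :: "nat \<Rightarrow> task list \<Rightarrow> real \<Rightarrow> (nat \<Rightarrow> real) \<Rightarrow> bool" where
  "PS p D T c \<longleftrightarrow> 0 \<le> T \<and>
     (\<forall>i<length D. c i \<le> T \<longrightarrow> completes_at (rt p D c i) (wk p D i) (c i)) \<and>
     (\<forall>i<length D. T < c i \<longrightarrow> integral {0..T} (rt p D c i) < wk p D i)"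

definition muprog :: "task list \<Rightarrow> real \<Rightarrow> (nat \<Rightarrow> real) \<Rightarrow> nat" where
  "muprog D T c = card {i. i < length D \<and> c i \<le> T} +
     card {i. i < length D \<and> (c i \<le> T \<or> (release (D!i) \<le> T \<and> (\<forall>d\<in>deps (D!i). c d \<le> T)))}"

definition Sol :: "nat \<Rightarrow> task list \<Rightarrow> (nat \<Rightarrow> real) \<Rightarrow> bool" where
  "Sol p D c \<longleftrightarrow> (\<forall>i<length D. completes_at (rt p D c i) (wk p D i) (c i))"

lemma wk_pos: "valid_dtap p D \<Longrightarrow> i < length D \<Longrightarrow> 0 < wk p D i"
proof -
  assume v: "valid_dtap p D" and i: "i < length D"
  then have a: "0 < ser_work (D!i)" "1 \<le> par_work (D!i) / ser_work (D!i)"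
    unfolding valid_dtap_def by auto
  then have "ser_work (D!i) \<le> par_work (D!i)" by (simp add: le_divide_eq)
  then show ?thesis using a unfolding wk_def by auto
qed

lemma wf_R:
  assumes "valid_dtap p D"
  shows "wf {(j, i). i < length D \<and> j \<in> deps (D!i)}"
proof (rule finite_acyclic_wf)
  show "finite {(j, i). i < length D \<and> j \<in> deps (D!i)}"
    by (rule finite_subset[of _ "{..<length D} \<times> {..<length D}"])
       (use assms in \<open>auto simp: valid_dtap_def\<close>)
  show "acyclic {(j, i). i < length D \<and> j \<in> deps (D!i)}"
    using assms by (simp add: valid_dtap_def)
qed

lemma muprog_le: "muprog D T c \<le> 2 * length D"
proof -
  have "card {i. i < length D \<and> c i \<le> T} \<le> card {..<length D}"
    by (rule card_mono) auto
  moreover have "card {i. i < length D \<and> (c i \<le> T \<or> (release (D!i) \<le> T \<and> (\<forall>d\<in>deps (D!i). c d \<le> T)))} \<le> card {..<length D}"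
    by (rule card_mono) auto
  ultimately show ?thesis unfolding muprog_def by simp
qed



lemma step_exists:
  assumes v: "valid_dtap p D" and p1: "1 \<le> p" and ps: "PS p D T c"
    and pend: "\<exists>i<length D. T < c i"
  shows "\<exists>T' c'. PS p D T' c' \<and> muprog D T c < muprog D T' c'"
proof -
  define n where "n = length D"
  have w: "wfD D" using valid_wfD[OF v] .
  have T0: "0 \<le> T" and psd: "\<And>i. i < n \<Longrightarrow> c i \<le> T \<Longrightarrow> completes_at (rt p D c i) (wk p D i) (c i)"
    and psp: "\<And>i. i < n \<Longrightarrow> T < c i \<Longrightarrow> integral {0..T} (rt p D c i) < wk p D i"
    using ps unfolding PS_def n_def by auto
  define Act where "Act = {j. j < n \<and> T < c j \<and> release (D!j) \<le> T \<and> (\<forall>d\<in>deps (D!j). c d \<le> T)}"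
  define ns0 where "ns0 = (\<Sum>j<n. if j \<in> Act \<and> isser p D j then 1 else 0::real)"
  define np0 where "np0 = (\<Sum>j<n. if j \<in> Act \<and> \<not> isser p D j then 1 else 0::real)"
  define \<rho> where "\<rho> j = (if isser p D j then min 1 (real p / ns0) else (real p - min ns0 (real p)) / np0)" for j
  define rem where "rem j = wk p D j - integral {0..T} (rt p D c j)" for j
  define P2 where "P2 = {j. j < n \<and> T < c j \<and> (\<forall>d\<in>deps (D!j). c d \<le> T) \<and> T < release (D!j)}"
  define C1 where "C1 = (\<lambda>j. T + rem j / \<rho> j) ` {j \<in> Act. 0 < \<rho> j}"
  define C2 where "C2 = (\<lambda>j. release (D!j)) ` P2"
  define T' where "T' = Min (C1 \<union> C2)"
  define c' where "c' j = (if j \<in> Act \<and> 0 < \<rho> j \<and> T + rem j / \<rho> j = T' then T'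
                             else if c j \<le> T then c j else T' + 1)" for j
  have ns0_nn: "0 \<le> ns0" unfolding ns0_def by (rule sum_nonneg) auto
  have np0_nn: "0 \<le> np0" unfolding np0_def by (rule sum_nonneg) auto
  have rho_nn: "0 \<le> \<rho> j" for j
    unfolding \<rho>_def using ns0_nn np0_nn by (auto intro!: divide_nonneg_nonneg)
  have finAct: "finite Act" unfolding Act_def by auto
  have finP2: "finite P2" unfolding P2_def by auto
  have fin: "finite (C1 \<union> C2)" unfolding C1_def C2_def using finAct finP2 by auto
  have rem_pos: "0 < rem j" if "j < n" "T < c j" for j
    using psp[OF that] unfolding rem_def by simp
  obtain z where z: "z < n" "T < c z" "\<forall>d\<in>deps (D!z). c d \<le> T"
  proof -
    obtain i where i: "i < n" "T < c i" using pend n_def by auto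
    have "i \<in> {j. j < n \<and> T < c j}" using i by auto
    from wfE_min[OF wf_R[OF v] this] obtain z where
      zQ: "z \<in> {j. j < n \<and> T < c j}" and
      zmin: "\<And>y. (y, z) \<in> {(j, i). i < length D \<and> j \<in> deps (D!i)} \<Longrightarrow> y \<notin> {j. j < n \<and> T < c j}"
      by blast
    have "\<forall>d\<in>deps (D!z). c d \<le> T"
    proof
      fix d assume d: "d \<in> deps (D!z)"
      then have "d < n" using wfD_dep[OF w] zQ n_def by auto
      moreover have "d \<notin> {j. j < n \<and> T < c j}" using zmin[of d] d zQ n_def by auto
      ultimately show "c d \<le> T" by auto
    qed
    then show ?thesis using that zQ by auto
  qed
  have ne: "C1 \<union> C2 \<noteq> {}"
  proof (cases "release (D!z) \<le> T")
    case True
    then have zA: "z \<in> Act" unfolding Act_def using z by auto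
    have "\<exists>j\<in>Act. 0 < \<rho> j"
    proof (cases "\<exists>j\<in>Act. isser p D j")
      case True
      then obtain j where j: "j \<in> Act" "isser p D j" by auto
      have "(\<Sum>j\<in>{j}. if j \<in> Act \<and> isser p D j then 1 else 0::real) \<le> ns0"
        unfolding ns0_def by (rule sum_mono2) (use j in \<open>auto simp: Act_def\<close>)
      then have "1 \<le> ns0" using j by simp
      then have "0 < \<rho> j" unfolding \<rho>_def using j p1 by auto
      then show ?thesis using j by auto
    next
      case False
      then have "ns0 = 0" unfolding ns0_def by (auto intro!: sum.neutral)
      moreover have "(\<Sum>j\<in>{z}. if j \<in> Act \<and> \<not> isser p D j then 1 else 0::real) \<le> np0"
        unfolding np0_def by (rule sum_mono2) (use zA z in \<open>auto simp: Act_def\<close>)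
      then have "1 \<le> np0" using zA False by auto
      ultimately have "0 < \<rho> z" unfolding \<rho>_def using False zA p1 by auto
      then show ?thesis using zA by auto
    qed
    then show ?thesis unfolding C1_def by auto
  next
    case False
    then have "z \<in> P2" unfolding P2_def using z by auto
    then show ?thesis unfolding C2_def by auto
  qed
  have T'_in: "T' \<in> C1 \<union> C2" unfolding T'_def by (rule Min_in[OF fin ne])
  have T'_le1: "T' \<le> T + rem j / \<rho> j" if "j \<in> Act" "0 < \<rho> j" for j
    unfolding T'_def by (rule Min_le[OF fin]) (use that in \<open>auto simp: C1_def\<close>)
  have T'_le2: "T' \<le> release (D!j)" if "j \<in> P2" for j
    unfolding T'_def by (rule Min_le[OF fin]) (use that in \<open>auto simp: C2_def\<close>)
  have T_less: "T < T'"
  proof -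
    have "T < x" if "x \<in> C1 \<union> C2" for x
    proof -
      from that show ?thesis
      proof
        assume "x \<in> C1"
        then obtain j where j: "j \<in> Act" "0 < \<rho> j" "x = T + rem j / \<rho> j" unfolding C1_def by auto
        have "0 < rem j" using j rem_pos unfolding Act_def by auto
        then show ?thesis using j by auto
      next
        assume "x \<in> C2"
        then show ?thesis unfolding C2_def P2_def by auto
      qed
    qed
    then show ?thesis using T'_in by auto
  qed
  have ag: "\<forall>j<length D. c j = c' j \<or> (T < c j \<and> T < c' j)"
    unfolding c'_def Act_def using T_less by auto
  have rt_early: "rt p D c' j s = rt p D c j s" if "s \<le> T" for j s
    using rt_agree[OF w ag that] by simp
  have act_mid: "act D c' j s \<longleftrightarrow> j \<in> Act" if s: "T < s" "s < T'" and j: "j < n" for j s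
  proof -
    have f: "finite (deps (D!j))" using wfD_fin[OF w] j n_def by auto
    show ?thesis
    proof
      assume a: "act D c' j s"
      then have av: "release (D!j) < s" "\<forall>d\<in>deps (D!j). c' d < s" "s < c' j"
        unfolding act_def av_less_iff[OF f] by auto
      have cj: "T < c j"
      proof (rule ccontr)
        assume "\<not> T < c j"
        then have "c' j = c j" unfolding c'_def Act_def by auto
        then show False using av(3) s \<open>\<not> T < c j\<close> by auto
      qed
      have dd: "\<forall>d\<in>deps (D!j). c d \<le> T"
      proof
        fix d assume d: "d \<in> deps (D!j)"
        show "c d \<le> T"
        proof (rule ccontr)
          assume "\<not> c d \<le> T"
          then have "T' \<le> c' d" unfolding c'_def by auto
          then show False using av(2) d s by fastforce
        qed
      qed
      have "release (D!j) \<le> T"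
      proof (rule ccontr)
        assume "\<not> release (D!j) \<le> T"
        then have "j \<in> P2" unfolding P2_def using j cj dd by auto
        then show False using T'_le2 av(1) s by fastforce
      qed
      then show "j \<in> Act" unfolding Act_def using j cj dd by auto
    next
      assume jA: "j \<in> Act"
      have "\<forall>d\<in>deps (D!j). c' d < s"
      proof
        fix d assume d: "d \<in> deps (D!j)"
        then have "c d \<le> T" using jA unfolding Act_def by auto
        then have "c' d = c d" unfolding c'_def Act_def by auto
        then show "c' d < s" using \<open>c d \<le> T\<close> s by auto
      qed
      moreover have "release (D!j) < s" using jA s unfolding Act_def by auto
      moreover have "T' \<le> c' j" using jA unfolding c'_def Act_def by auto
      ultimately show "act D c' j s" unfolding act_def av_less_iff[OF f] using j n_def s by auto
    qed
  qed
  have rt_mid: "rt p D c' j s = (if j \<in> Act then \<rho> j else 0)" if s: "T < s" "s < T'" and j: "j < n" for j s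
  proof -
    have "nser p D c' s = ns0" unfolding nser_def ns0_def n_def
      by (rule sum.cong) (use act_mid[OF s] n_def in auto)
    moreover have "npar p D c' s = np0" unfolding npar_def np0_def n_def
      by (rule sum.cong) (use act_mid[OF s] n_def in auto)
    ultimately show ?thesis unfolding rt_def \<rho>_def using act_mid[OF s j] by auto
  qed
  have int_mid: "integral {0..x} (rt p D c' j) = integral {0..T} (rt p D c j) + (x - T) * (if j \<in> Act then \<rho> j else 0)"
    if x: "T \<le> x" "x \<le> T'" and j: "j < n" for j x
  proof -
    have "integral {0..T} (rt p D c' j) + integral {T..x} (rt p D c' j) = integral {0..x} (rt p D c' j)"
      by (rule Henstock_Kurzweil_Integration.integral_combine) (use x T0 rt_integrable in auto)
    moreover have "integral {0..T} (rt p D c' j) = integral {0..T} (rt p D c j)"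
      by (rule integral_cong) (use rt_early in auto)
    moreover have "integral {T..x} (rt p D c' j) = integral {T..x} (\<lambda>_. if j \<in> Act then \<rho> j else 0)"
      by (rule integral_spike[where S="{T, x}"]) (use rt_mid j x in auto)
    moreover have "integral {T..x} (\<lambda>_. if j \<in> Act then \<rho> j else 0) = (x - T) * (if j \<in> Act then \<rho> j else 0)"
      using x by simp
    ultimately show ?thesis by linarith
  qed
  have mono_c: "integral {0..s} (rt p D c j) \<le> integral {0..T} (rt p D c j)" if "s \<le> T" for s j
    by (rule integral_mono_upper) (use that T0 rt_nonneg rt_integrable in auto)
  have PS': "PS p D T' c'"
    unfolding PS_def
  proof (intro conjI allI impI)
    show "0 \<le> T'" using T0 T_less by auto
  next
    fix i assume i: "i < length D" and ci: "c' i \<le> T'"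
    show "completes_at (rt p D c' i) (wk p D i) (c' i)"
    proof (cases "c i \<le> T")
      case True
      then have eq: "c' i = c i" unfolding c'_def Act_def by auto
      have cc: "completes_at (rt p D c i) (wk p D i) (c i)" using psd i True n_def by auto
      have "\<And>y. y \<le> c i \<Longrightarrow> integral {0..y} (rt p D c' i) = integral {0..y} (rt p D c i)"
        by (rule integral_cong_upto[where T=T]) (use rt_early True in auto)
      then show ?thesis using cc unfolding eq completes_at_def by auto
    next
      case False
      then have first: "i \<in> Act \<and> 0 < \<rho> i \<and> T + rem i / \<rho> i = T'"
        using ci unfolding c'_def by (auto split: if_splits)
      then have eq: "c' i = T'" unfolding c'_def by auto
      have "integral {0..T'} (rt p D c' i) = integral {0..T} (rt p D c i) + (T' - T) * \<rho> i"
        using int_mid[of T' i] T_less i first n_def by auto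
      also have "(T' - T) * \<rho> i = rem i" using first by (auto simp: field_simps)
      finally have e1: "integral {0..T'} (rt p D c' i) = wk p D i" unfolding rem_def by simp
      have e2: "integral {0..s} (rt p D c' i) < wk p D i" if s: "s < T'" for s
      proof (cases "s \<le> T")
        case True
        have "integral {0..s} (rt p D c' i) = integral {0..s} (rt p D c i)"
          by (rule integral_cong_upto[where T=T]) (use rt_early True in auto)
        also have "\<dots> \<le> integral {0..T} (rt p D c i)" using mono_c True by auto
        also have "\<dots> < wk p D i" using psp i False n_def by auto
        finally show ?thesis .
      next
        case False
        have "integral {0..s} (rt p D c' i) = integral {0..T} (rt p D c i) + (s - T) * \<rho> i"
          using int_mid[of s i] False s i first n_def by auto
        also have "(s - T) * \<rho> i < (T' - T) * \<rho> i" using s first by auto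
        also have "(T' - T) * \<rho> i = rem i" using first by (auto simp: field_simps)
        finally show ?thesis unfolding rem_def by simp
      qed
      show ?thesis unfolding completes_at_def eq using e1 e2 by auto
    qed
  next
    fix i assume i: "i < length D" and ci: "T' < c' i"
    have notfirst: "\<not> (i \<in> Act \<and> 0 < \<rho> i \<and> T + rem i / \<rho> i = T')"
      using ci unfolding c'_def by auto
    have cT: "T < c i"
    proof (rule ccontr)
      assume "\<not> T < c i"
      then have "c' i = c i" unfolding c'_def Act_def by auto
      then show False using ci T_less \<open>\<not> T < c i\<close> by auto
    qed
    have "integral {0..T'} (rt p D c' i) = integral {0..T} (rt p D c i) + (T' - T) * (if i \<in> Act then \<rho> i else 0)"
      using int_mid[of T' i] T_less i n_def by auto
    also have "\<dots> < wk p D i"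
    proof (cases "i \<in> Act \<and> 0 < \<rho> i")
      case True
      then have "T' < T + rem i / \<rho> i" using T'_le1[of i] notfirst by force
      then have "(T' - T) * \<rho> i < rem i" using True by (auto simp: field_simps)
      then show ?thesis using True unfolding rem_def by auto
    next
      case False
      then have "(T' - T) * (if i \<in> Act then \<rho> i else 0) = 0" using rho_nn[of i] by auto
      then show ?thesis using psp[of i] i cT n_def by auto
    qed
    finally show "integral {0..T'} (rt p D c' i) < wk p D i" .
  qed
  define A1 where "A1 = {i. i < length D \<and> c i \<le> T}"
  define A1' where "A1' = {i. i < length D \<and> c' i \<le> T'}"
  define A2 where "A2 = {i. i < length D \<and> (c i \<le> T \<or> (release (D!i) \<le> T \<and> (\<forall>d\<in>deps (D!i). c d \<le> T)))}"
  define A2' where "A2' = {i. i < length D \<and> (c' i \<le> T' \<or> (release (D!i) \<le> T' \<and> (\<forall>d\<in>deps (D!i). c' d \<le> T')))}"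
  have cdone: "c' i = c i" if "c i \<le> T" for i using that unfolding c'_def Act_def by auto
  have s1: "A1 \<subseteq> A1'" unfolding A1_def A1'_def using cdone T_less by force
  have s2: "A2 \<subseteq> A2'" unfolding A2_def A2'_def using cdone T_less by force
  have fA1': "finite A1'" "finite A2'" unfolding A1'_def A2'_def by auto
  have "card A1 + card A2 < card A1' + card A2'"
  proof -
    from T'_in show ?thesis
    proof
      assume "T' \<in> C1"
      then obtain j where j: "j \<in> Act" "0 < \<rho> j" "T + rem j / \<rho> j = T'" unfolding C1_def by auto
      then have "j \<in> A1'" "j \<notin> A1" unfolding A1'_def A1_def c'_def Act_def n_def by auto
      then have "A1 \<subset> A1'" using s1 by auto
      then have "card A1 < card A1'" by (rule psubset_card_mono[OF fA1'(1)])
      moreover have "card A2 \<le> card A2'" by (rule card_mono[OF fA1'(2) s2])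
      ultimately show ?thesis by simp
    next
      assume "T' \<in> C2"
      then obtain j where j: "j \<in> P2" "release (D!j) = T'" unfolding C2_def by auto
      have "j \<in> A2'" using j cdone unfolding A2'_def P2_def n_def by auto
      moreover have "j \<notin> A2" using j T_less unfolding A2_def P2_def by auto
      ultimately have "A2 \<subset> A2'" using s2 by auto
      then have "card A2 < card A2'" by (rule psubset_card_mono[OF fA1'(2)])
      moreover have "card A1 \<le> card A1'" by (rule card_mono[OF fA1'(1) s1])
      ultimately show ?thesis by simp
    qed
  qed
  then have "muprog D T c < muprog D T' c'" unfolding muprog_def A1_def A1'_def A2_def A2'_def .
  then show ?thesis using PS' by auto
qed



lemma sol_exists:
  assumes v: "valid_dtap p D" and p1: "1 \<le> p"
  shows "\<exists>c. Sol p D c"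
proof -
  have main: "\<forall>T c. PS p D T c \<longrightarrow> 2 * length D - muprog D T c \<le> k \<longrightarrow> (\<exists>c'. Sol p D c')" for k
  proof (induction k)
    case 0
    show ?case
    proof (intro allI impI)
      fix T c assume ps: "PS p D T c" and k: "2 * length D - muprog D T c \<le> 0"
      show "\<exists>c'. Sol p D c'"
      proof (cases "\<exists>i<length D. T < c i")
        case True
        then obtain T' c' where "muprog D T c < muprog D T' c'" using step_exists[OF v p1 ps] by blast
        then show ?thesis using k muprog_le[of D T' c'] by linarith
      next
        case False
        then have "Sol p D c" using ps unfolding PS_def Sol_def by (meson not_less)
        then show ?thesis by blast
      qed
    qed
  next
    case (Suc k)
    show ?case
    proof (intro allI impI)
      fix T c assume ps: "PS p D T c" and k: "2 * length D - muprog D T c \<le> Suc k"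
      show "\<exists>c'. Sol p D c'"
      proof (cases "\<exists>i<length D. T < c i")
        case True
        then obtain T' c' where ps': "PS p D T' c'" and m: "muprog D T c < muprog D T' c'"
          using step_exists[OF v p1 ps] by blast
        then have "2 * length D - muprog D T' c' \<le> k" using k muprog_le[of D T' c'] by linarith
        then show ?thesis using Suc.IH ps' by blast
      next
        case False
        then have "Sol p D c" using ps unfolding PS_def Sol_def by (meson not_less)
        then show ?thesis by blast
      qed
    qed
  qed
  have "PS p D 0 (\<lambda>_. 1)" unfolding PS_def using wk_pos[OF v] by auto
  then show ?thesis using main[of "2 * length D"] by auto
qed



definition mk :: "nat \<Rightarrow> task list \<Rightarrow> (nat \<Rightarrow> real) \<Rightarrow> sched" where
  "mk p D c = \<lparr>srate = (\<lambda>i s. if isser p D i then rt p D c i s else 0),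
               prate = (\<lambda>i s. if isser p D i then 0 else rt p D c i s), compl = c\<rparr>"

definition alg :: "nat \<Rightarrow> task list \<Rightarrow> sched" where
  "alg p D = mk p D (SOME c. Sol p D c)"

lemma compl_mk: "compl (mk p D c) = c" by (simp add: mk_def)

lemma alg_sol: "valid_dtap p D \<Longrightarrow> 1 \<le> p \<Longrightarrow> Sol p D (compl (alg p D))"
  unfolding alg_def compl_mk using sol_exists by (simp add: someI_ex)

lemma alg_eq: "alg p D = mk p D (compl (alg p D))"
  unfolding alg_def compl_mk by simp

lemma mk_valid:
  assumes v: "valid_dtap p D" and sol: "Sol p D c"
  shows "valid_sched p D (mk p D c)"
  unfolding valid_sched_def
proof (rule conjI[OF allI[OF impI] allI])
  fix t
  have "(\<Sum>i<length D. srate (mk p D c) i t + prate (mk p D c) i t) = tot p D c t"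
    unfolding tot_def mk_def by (rule sum.cong) auto
  then show "(\<Sum>i<length D. srate (mk p D c) i t + prate (mk p D c) i t) \<le> real p"
    using tot_le by simp
next
  fix i assume i: "i < length D"
  show "(\<forall>t. 0 \<le> srate (mk p D c) i t \<and> srate (mk p D c) i t \<le> 1 \<and> 0 \<le> prate (mk p D c) i t) \<and>
          (\<forall>T. srate (mk p D c) i integrable_on {0..T} \<and> prate (mk p D c) i integrable_on {0..T}) \<and>
          (\<forall>t. 0 < srate (mk p D c) i t + prate (mk p D c) i t \<longrightarrow> available D (mk p D c) i t) \<and>
          ((\<forall>t. prate (mk p D c) i t = 0) \<and> completes_at (srate (mk p D c) i) (ser_work (D ! i)) (compl (mk p D c) i) \<or>
           (\<forall>t. srate (mk p D c) i t = 0) \<and> completes_at (prate (mk p D c) i) (par_work (D ! i)) (compl (mk p D c) i))"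
  proof (intro conjI)
  have f: "finite (deps (D!i))" using wfD_fin[OF valid_wfD[OF v] i] .
  show "\<forall>t. 0 \<le> srate (mk p D c) i t \<and> srate (mk p D c) i t \<le> 1 \<and> 0 \<le> prate (mk p D c) i t"
    unfolding mk_def using rt_nonneg rt_ser_le1 by auto
  show "\<forall>T. srate (mk p D c) i integrable_on {0..T} \<and> prate (mk p D c) i integrable_on {0..T}"
    unfolding mk_def using rt_integrable by (cases "isser p D i") auto
  show "\<forall>t. 0 < srate (mk p D c) i t + prate (mk p D c) i t \<longrightarrow> available D (mk p D c) i t"
  proof (intro allI impI)
    fix t assume "0 < srate (mk p D c) i t + prate (mk p D c) i t"
    then have "0 < rt p D c i t" unfolding mk_def by (auto split: if_splits)
    then have "act D c i t" by (rule rt_pos_act)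
    then show "available D (mk p D c) i t"
      unfolding act_def av_less_iff[OF f] available_def mk_def by auto
  qed
  have ca: "completes_at (rt p D c i) (wk p D i) (c i)" using sol i unfolding Sol_def by auto
  show "(\<forall>t. prate (mk p D c) i t = 0) \<and> completes_at (srate (mk p D c) i) (ser_work (D ! i)) (compl (mk p D c) i) \<or>
        (\<forall>t. srate (mk p D c) i t = 0) \<and> completes_at (prate (mk p D c) i) (par_work (D ! i)) (compl (mk p D c) i)"
  proof (cases "isser p D i")
    case True
    have "srate (mk p D c) i = rt p D c i" unfolding mk_def using True by auto
    then show ?thesis using ca True unfolding wk_def mk_def by auto
  next
    case False
    have "prate (mk p D c) i = rt p D c i" unfolding mk_def using False by auto
    then show ?thesis using ca False unfolding wk_def mk_def by auto
  qed
  qed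
qed

lemma alg_valid: "valid_dtap p D \<Longrightarrow> 1 \<le> p \<Longrightarrow> valid_sched p D (alg p D)"
  using mk_valid[OF _ alg_sol] alg_eq by metis

lemma rt_transfer:
  assumes K: "K \<subseteq> {..<length D}" and K': "K' \<subseteq> {..<length D'}" and b: "bij_betw f K K'"
    and inK: "\<And>j. act D c j s \<Longrightarrow> j \<in> K" and inK': "\<And>j. act D' c' j s \<Longrightarrow> j \<in> K'"
    and ag: "\<And>j. j \<in> K \<Longrightarrow> act D' c' (f j) s = act D c j s"
    and ty: "\<And>j. j \<in> K \<Longrightarrow> isser p D' (f j) = isser p D j"
    and i: "i \<in> K"
  shows "rt p D' c' (f i) s = rt p D c i s"
proof -
  have gen: "(\<Sum>j<length D'. if act D' c' j s \<and> P' j then 1 else 0::real) =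
             (\<Sum>j<length D. if act D c j s \<and> P j then 1 else 0)"
    if PP: "\<And>j. j \<in> K \<Longrightarrow> P' (f j) = P j" for P P'
  proof -
    have "(\<Sum>j<length D'. if act D' c' j s \<and> P' j then 1 else 0::real) =
          (\<Sum>j\<in>K'. if act D' c' j s \<and> P' j then 1 else 0)"
      by (rule sum.mono_neutral_right) (use K' inK' in auto)
    also have "\<dots> = (\<Sum>j\<in>K. if act D' c' (f j) s \<and> P' (f j) then 1 else 0)"
      using sum.reindex_bij_betw[OF b, of "\<lambda>j. if act D' c' j s \<and> P' j then 1 else 0::real"] by simp
    also have "\<dots> = (\<Sum>j\<in>K. if act D c j s \<and> P j then 1 else 0)"
      by (rule sum.cong) (use ag PP in auto)
    also have "\<dots> = (\<Sum>j<length D. if act D c j s \<and> P j then 1 else 0)"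
      by (rule sum.mono_neutral_left) (use K inK in auto)
    finally show ?thesis .
  qed
  have "nser p D' c' s = nser p D c s" unfolding nser_def by (rule gen) (use ty in auto)
  moreover have "npar p D' c' s = npar p D c s" unfolding npar_def by (rule gen) (use ty in auto)
  ultimately show ?thesis unfolding rt_def using ag[OF i] ty[OF i] by simp
qed



lemma avail_time_mk: "avail_time D (mk p D c) i = av D c i"
  unfolding avail_time_def av_def compl_mk ..

lemma known_eq: "wfD D \<Longrightarrow> known D (mk p D c) t = {i. i < length D \<and> av D c i < t}"
  unfolding known_def compl_mk using wfD_fin av_less_iff by blast

lemma alg_online:
  assumes p1: "1 \<le> p"
  shows "online p (alg p)"
  unfolding online_def
proof (intro allI impI)
  fix D D' t f
  assume H: "valid_dtap p D \<and> valid_dtap p D' \<and>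
        bij_betw f (known D (alg p D) t) (known D' (alg p D') t) \<and>
        (\<forall>i\<in>known D (alg p D) t.
           ser_work (D' ! f i) = ser_work (D ! i) \<and>
           par_work (D' ! f i) = par_work (D ! i) \<and>
           release (D' ! f i) = release (D ! i) \<and>
           deps (D' ! f i) = f ` deps (D ! i) \<and> avail_time D' (alg p D') (f i) = avail_time D (alg p D) i)"
  define c where "c = compl (alg p D)"
  define c' where "c' = compl (alg p D')"
  have v: "valid_dtap p D" and v': "valid_dtap p D'" using H by auto
  have w: "wfD D" and w': "wfD D'" using valid_wfD v v' by auto
  have A: "alg p D = mk p D c" and A': "alg p D' = mk p D' c'"
    unfolding c_def c'_def using alg_eq by auto
  define K where "K = known D (alg p D) t"
  define K' where "K' = known D' (alg p D') t"
  have Keq: "K = {i. i < length D \<and> av D c i < t}" unfolding K_def A using known_eq[OF w] .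
  have Keq': "K' = {i. i < length D' \<and> av D' c' i < t}" unfolding K'_def A' using known_eq[OF w'] .
  have b: "bij_betw f K K'" using H unfolding K_def K'_def by auto
  have fK: "f j \<in> K'" if "j \<in> K" for j using b that by (auto simp: bij_betw_def)
  have par: "ser_work (D' ! f j) = ser_work (D ! j)" "par_work (D' ! f j) = par_work (D ! j)"
     "av D' c' (f j) = av D c j" if "j \<in> K" for j
  proof -
    have "\<forall>i\<in>K. ser_work (D' ! f i) = ser_work (D ! i) \<and>
           par_work (D' ! f i) = par_work (D ! i) \<and> avail_time D' (alg p D') (f i) = avail_time D (alg p D) i"
      using H unfolding K_def by auto
    then show "ser_work (D' ! f j) = ser_work (D ! j)" "par_work (D' ! f j) = par_work (D ! j)"
     "av D' c' (f j) = av D c j" using that unfolding A A' avail_time_mk by auto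
  qed
  have ty: "isser p D' (f j) = isser p D j" if "j \<in> K" for j
    unfolding isser_def using par[OF that] by simp
  have wkeq: "wk p D' (f j) = wk p D j" if "j \<in> K" for j
    unfolding wk_def using par[OF that] ty[OF that] by simp
  have Ksub: "K \<subseteq> {..<length D}" and K'sub: "K' \<subseteq> {..<length D'}" using Keq Keq' by auto
  have inK: "j \<in> K" if "act D c j s" "s \<le> t" for j s using that unfolding act_def Keq by auto
  have inK': "j \<in> K'" if "act D' c' j s" "s \<le> t" for j s using that unfolding act_def Keq' by auto
  have sol: "Sol p D c" and sol': "Sol p D' c'" unfolding c_def c'_def using alg_sol p1 v v' by auto
  have fin: "finite K" using Ksub finite_subset by auto
  have good: "\<forall>j\<in>K. c j = c' (f j) \<or> (t < c j \<and> t < c' (f j))"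
  proof (rule ccontr)
    assume nt: "\<not> ?thesis"
    define bad where "bad = {j \<in> K. \<not> (c j = c' (f j) \<or> (t < c j \<and> t < c' (f j)))}"
    have bne: "bad \<noteq> {}" using nt unfolding bad_def by auto
    have bfin: "finite bad" using fin unfolding bad_def by auto
    define m where "m = Min ((\<lambda>j. min (c j) (c' (f j))) ` bad)"
    have m_le: "m \<le> min (c j) (c' (f j))" if "j \<in> bad" for j
      unfolding m_def by (rule Min_le) (use bfin that in auto)
    obtain j0 where j0: "j0 \<in> bad" "m = min (c j0) (c' (f j0))"
    proof -
      have "m \<in> (\<lambda>j. min (c j) (c' (f j))) ` bad" unfolding m_def by (rule Min_in) (use bfin bne in auto)
      then show ?thesis using that by auto
    qed
    have mt: "m \<le> t" using j0 unfolding bad_def by auto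
    have actag: "act D' c' (f j) s = act D c j s" if "j \<in> K" "s < m" for j s
    proof (cases "j \<in> bad")
      case True
      then show ?thesis using m_le[OF True] that par[of j] fK[of j] Ksub K'sub
        unfolding act_def by auto
    next
      case False
      then have "c j = c' (f j) \<or> (t < c j \<and> t < c' (f j))" using that unfolding bad_def by auto
      then show ?thesis using that par[of j] fK[of j] Ksub K'sub mt unfolding act_def by auto
    qed
    have rteq: "rt p D' c' (f j0) s = rt p D c j0 s" if "s < m" for s
    proof (rule rt_transfer[OF Ksub K'sub b])
      show "\<And>j. act D c j s \<Longrightarrow> j \<in> K" using inK that mt by auto
      show "\<And>j. act D' c' j s \<Longrightarrow> j \<in> K'" using inK' that mt by auto
      show "\<And>j. j \<in> K \<Longrightarrow> act D' c' (f j) s = act D c j s" using actag that by auto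
      show "\<And>j. j \<in> K \<Longrightarrow> isser p D' (f j) = isser p D j" using ty by auto
      show "j0 \<in> K" using j0 unfolding bad_def by auto
    qed
    have inteq: "integral {0..m} (rt p D' c' (f j0)) = integral {0..m} (rt p D c j0)"
      by (rule integral_spike[where S="{m}"]) (use rteq in auto)
    have j0K: "j0 \<in> K" using j0 unfolding bad_def by auto
    have ne: "c j0 \<noteq> c' (f j0)" using j0 unfolding bad_def by auto
    have ca: "completes_at (rt p D c j0) (wk p D j0) (c j0)" using sol j0K Ksub unfolding Sol_def by auto
    have ca': "completes_at (rt p D' c' (f j0)) (wk p D' (f j0)) (c' (f j0))"
      using sol' fK[OF j0K] K'sub unfolding Sol_def by auto
    show False
    proof (cases "c j0 \<le> c' (f j0)")
      case True
      then have "m = c j0" "c j0 < c' (f j0)" using j0 ne by auto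
      then show False using ca ca' inteq wkeq[OF j0K] unfolding completes_at_def by force
    next
      case False
      then have "m = c' (f j0)" "c' (f j0) < c j0" using j0 ne by auto
      then show False using ca ca' inteq wkeq[OF j0K] unfolding completes_at_def by force
    qed
  qed
  show "\<forall>i\<in>known D (alg p D) t. \<forall>s\<le>t.
          srate (alg p D') (f i) s = srate (alg p D) i s \<and> prate (alg p D') (f i) s = prate (alg p D) i s"
  proof (intro ballI allI impI)
    fix i s assume i: "i \<in> known D (alg p D) t" and s: "s \<le> t"
    have iK: "i \<in> K" using i unfolding K_def .
    have actag: "act D' c' (f j) s = act D c j s" if "j \<in> K" for j
      using good that par[of j] fK[of j] Ksub K'sub s unfolding act_def by auto
    have "rt p D' c' (f i) s = rt p D c i s"
    proof (rule rt_transfer[OF Ksub K'sub b])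
      show "\<And>j. act D c j s \<Longrightarrow> j \<in> K" using inK s by auto
      show "\<And>j. act D' c' j s \<Longrightarrow> j \<in> K'" using inK' s by auto
      show "\<And>j. j \<in> K \<Longrightarrow> act D' c' (f j) s = act D c j s" using actag by auto
      show "\<And>j. j \<in> K \<Longrightarrow> isser p D' (f j) = isser p D j" using ty by auto
    qed (rule iK)
    then show "srate (alg p D') (f i) s = srate (alg p D) i s \<and> prate (alg p D') (f i) s = prate (alg p D) i s"
      unfolding A A' mk_def using ty[OF iK] by simp
  qed
qed



abbreviation mu :: "real set \<Rightarrow> real" where "mu S \<equiv> measure lebesgue S"

lemma borel_leb: "S \<in> sets borel \<Longrightarrow> S \<in> sets lebesgue"
  by (metis sets_completionI_sets sets_lborel)

lemma mu_nonneg: "0 \<le> mu S" by simp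

lemma mu_mono: "A \<in> sets borel \<Longrightarrow> B \<in> sets borel \<Longrightarrow> bounded B \<Longrightarrow> A \<subseteq> B \<Longrightarrow> mu A \<le> mu B"
  by (meson borel_leb bounded_set_imp_lmeasurable measure_mono_fmeasurable)

lemma mu_un: "A \<in> sets borel \<Longrightarrow> B \<in> sets borel \<Longrightarrow> mu (A \<union> B) \<le> mu A + mu B"
  by (meson borel_leb measure_Un_le)

lemma mu_disj: "A \<in> sets borel \<Longrightarrow> B \<in> sets borel \<Longrightarrow> bounded A \<Longrightarrow> bounded B \<Longrightarrow> A \<inter> B = {} \<Longrightarrow>
   mu (A \<union> B) = mu A + mu B"
proof -
  assume a: "A \<in> sets borel" "B \<in> sets borel" "bounded A" "bounded B" "A \<inter> B = {}"
  have "A \<in> lmeasurable" "B \<in> lmeasurable" using a by (auto intro: bounded_set_imp_lmeasurable borel_leb)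
  then show ?thesis using a(5) by (intro measure_Union) (auto simp: fmeasurable_def)
qed

lemma Ico_borel: "{a..<b::real} \<in> sets borel" by simp
lemma Ioo_borel: "{a<..<b::real} \<in> sets borel" by simp

lemma mu_Ico: "a \<le> b \<Longrightarrow> mu {a..<b} = b - a"
  by (subst measure_completion) auto

lemma mu_Ioo: "a \<le> b \<Longrightarrow> mu {a<..<b} = b - a"
  by (subst measure_completion) auto

lemma mu_fin: "finite F \<Longrightarrow> mu F = 0"
  by (simp add: negligible_finite negligible_imp_measure0)

lemma fin_borel: "finite (F::real set) \<Longrightarrow> F \<in> sets borel"
  by (simp add: borel_closed finite_imp_closed)

lemma mu_un_fin: "A \<in> sets borel \<Longrightarrow> finite F \<Longrightarrow> mu (A \<union> F) \<le> mu A"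
  using mu_un[of A F] fin_borel[of F] mu_fin[of F] by simp

lemma bounded_Ico: "bounded {a..<b::real}" by simp

lemma ind_integrable: "S \<in> sets borel \<Longrightarrow> (indicator S :: real \<Rightarrow> real) integrable_on {a..b}"
proof -
  assume "S \<in> sets borel"
  then have "(indicator S :: real \<Rightarrow> real) \<in> borel_measurable borel" by (simp add: borel_measurable_indicator)
  then show ?thesis by (rule bm_integrable[where B=1]) (auto simp: indicator_def)
qed

lemma mu_integral: "S \<in> sets borel \<Longrightarrow> integral {a..b} (indicator S) = mu (S \<inter> {a..b::real})"
proof -
  assume S: "S \<in> sets borel"
  have "S \<inter> {a..b} \<in> sets borel" using S by simp
  then have "S \<inter> {a..b} \<in> lmeasurable"
    by (intro bounded_set_imp_lmeasurable borel_leb) (auto intro: bounded_subset[of "{a..b}"])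
  then show ?thesis by (rule integral_indicator)
qed



lemma int_restrict:
  fixes f :: "real \<Rightarrow> real"
  assumes fi: "\<And>b. f integrable_on {0..b}" and cM: "c \<le> M"
  shows "(\<lambda>t. if t \<le> c then f t else 0) integrable_on {0..M}"
    and "integral {0..M} (\<lambda>t. if t \<le> c then f t else 0) = integral {0..c} f"
proof -
  define g where "g = (\<lambda>t. if t \<le> c then f t else 0)"
  have g1: "g integrable_on {0..b}" "integral {0..b} g = integral {0..b} f" if "b \<le> c" for b
  proof -
    have "integral {0..b} f = integral {0..b} g"
      by (rule integral_cong) (use that in \<open>auto simp: g_def\<close>)
    moreover have "g integrable_on {0..b}"
      by (rule integrable_eq[OF fi]) (use that in \<open>auto simp: g_def\<close>)
    ultimately show "g integrable_on {0..b}" "integral {0..b} g = integral {0..b} f" by auto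
  qed
  have g2: "g integrable_on {c..b}" "integral {c..b} g = 0" for b
  proof -
    have "(\<lambda>_. 0::real) integrable_on {c..b}" by (rule integrable_0)
    then show "g integrable_on {c..b}"
      by (rule integrable_spike[where S="{c}"]) (auto simp: g_def)
    have "integral {c..b} g = integral {c..b} (\<lambda>_. 0::real)"
      by (rule integral_spike[where S="{c}"]) (auto simp: g_def)
    then show "integral {c..b} g = 0" by simp
  qed
  have "g integrable_on {0..M} \<and> integral {0..M} g = integral {0..c} f"
  proof (cases "0 \<le> c")
    case True
    have gi: "g integrable_on {0..M}"
      by (rule Henstock_Kurzweil_Integration.integrable_combine[OF True cM g1(1) g2(1)]) auto
    have "integral {0..c} g + integral {c..M} g = integral {0..M} g"
      by (rule Henstock_Kurzweil_Integration.integral_combine[OF True cM gi])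
    then show ?thesis using gi g1(2)[of c] g2(2)[of M] by auto
  next
    case False
    have "integral {0..M} g = integral {0..M} (\<lambda>_. 0::real)"
      by (rule integral_cong) (use False in \<open>auto simp: g_def\<close>)
    moreover have "g integrable_on {0..M}"
      by (rule integrable_eq[of "\<lambda>_. 0::real"]) (use False in \<open>auto simp: g_def\<close>)
    ultimately show ?thesis using False by auto
  qed
  then show "(\<lambda>t. if t \<le> c then f t else 0) integrable_on {0..M}"
    and "integral {0..M} (\<lambda>t. if t \<le> c then f t else 0) = integral {0..c} f"
    unfolding g_def by auto
qed

lemma sum_int_le:
  fixes r :: "'i \<Rightarrow> real \<Rightarrow> real"
  assumes I: "finite I" and ri: "\<And>i b. i \<in> I \<Longrightarrow> r i integrable_on {0..b}"
    and cM: "\<And>i. i \<in> I \<Longrightarrow> c i \<le> M" and X: "X \<in> sets borel"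
    and pw: "\<And>t. t \<in> {0..M} \<Longrightarrow> (\<Sum>i\<in>I. if t \<le> c i then r i t else 0) \<le> b * indicator X t"
  shows "(\<Sum>i\<in>I. integral {0..c i} (r i)) \<le> b * mu (X \<inter> {0..M})"
proof -
  have "(\<Sum>i\<in>I. integral {0..c i} (r i)) = (\<Sum>i\<in>I. integral {0..M} (\<lambda>t. if t \<le> c i then r i t else 0))"
    by (rule sum.cong) (use int_restrict(2)[OF ri cM] in auto)
  also have "\<dots> = integral {0..M} (\<lambda>t. \<Sum>i\<in>I. if t \<le> c i then r i t else 0)"
    by (rule integral_sum[symmetric, OF I]) (use int_restrict(1)[OF ri cM] in auto)
  also have "\<dots> \<le> integral {0..M} (\<lambda>t. b * indicator X t)"
    by (rule integral_le)
       (use pw I int_restrict(1)[OF ri cM] integrable_on_cmult_left[OF ind_integrable[OF X], of b] in \<open>auto intro!: integrable_sum\<close>)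
  also have "\<dots> = b * mu (X \<inter> {0..M})" using mu_integral[OF X] by simp
  finally show ?thesis .
qed

lemma sum_int_ge:
  fixes r :: "'i \<Rightarrow> real \<Rightarrow> real"
  assumes I: "finite I" and ri: "\<And>i b. i \<in> I \<Longrightarrow> r i integrable_on {0..b}"
    and cM: "\<And>i. i \<in> I \<Longrightarrow> c i \<le> M" and X: "X \<in> sets borel"
    and pw: "\<And>t. t \<in> {0..M} \<Longrightarrow> b * indicator X t \<le> (\<Sum>i\<in>I. if t \<le> c i then r i t else 0)"
  shows "b * mu (X \<inter> {0..M}) \<le> (\<Sum>i\<in>I. integral {0..c i} (r i))"
proof -
  have "b * mu (X \<inter> {0..M}) = integral {0..M} (\<lambda>t. b * indicator X t)" using mu_integral[OF X] by simp
  also have "\<dots> \<le> integral {0..M} (\<lambda>t. \<Sum>i\<in>I. if t \<le> c i then r i t else 0)"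
    by (rule integral_le)
       (use pw I int_restrict(1)[OF ri cM] integrable_on_cmult_left[OF ind_integrable[OF X], of b] in \<open>auto intro!: integrable_sum\<close>)
  also have "\<dots> = (\<Sum>i\<in>I. integral {0..M} (\<lambda>t. if t \<le> c i then r i t else 0))"
    by (rule integral_sum[OF I]) (use int_restrict(1)[OF ri cM] in auto)
  also have "\<dots> = (\<Sum>i\<in>I. integral {0..c i} (r i))"
    by (rule sum.cong) (use int_restrict(2)[OF ri cM] in auto)
  finally show ?thesis .
qed



definition Oset :: "task list \<Rightarrow> sched \<Rightarrow> real set" where
  "Oset D S = {t. \<exists>i<length D. alive D S i t}"

definition Aset :: "task list \<Rightarrow> sched \<Rightarrow> nat \<Rightarrow> real set" where
  "Aset D S i = {t. alive D S i t}"

lemma available_iff: "finite (deps (D!i)) \<Longrightarrow>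
  available D S i t \<longleftrightarrow> release (D!i) < t \<and> av D (compl S) i \<le> t"
  unfolding available_def av_le_iff by auto

lemma alive_iff: "finite (deps (D!i)) \<Longrightarrow>
  alive D S i t \<longleftrightarrow> release (D!i) < t \<and> av D (compl S) i \<le> t \<and> t < compl S i"
  unfolding alive_def available_iff by auto

lemma Oset_eq: "wfD D \<Longrightarrow> Oset D S =
  {t. \<exists>i<length D. release (D!i) < t \<and> av D (compl S) i \<le> t \<and> t < compl S i}"
  unfolding Oset_def using alive_iff wfD_fin by blast

lemma Oset_borel: "wfD D \<Longrightarrow> Oset D S \<in> sets borel"
  unfolding Oset_eq by measurable

lemma Aset_borel: "wfD D \<Longrightarrow> i < length D \<Longrightarrow> Aset D S i \<in> sets borel"
proof -
  assume "wfD D" "i < length D"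
  then have "Aset D S i = {t. release (D!i) < t \<and> av D (compl S) i \<le> t \<and> t < compl S i}"
    unfolding Aset_def using alive_iff wfD_fin by blast
  then show ?thesis by simp
qed

lemma vs_nonneg: "valid_sched p D S \<Longrightarrow> i < length D \<Longrightarrow> 0 \<le> srate S i t \<and> 0 \<le> prate S i t \<and> srate S i t \<le> 1"
  unfolding valid_sched_def by auto

lemma vs_int: "valid_sched p D S \<Longrightarrow> i < length D \<Longrightarrow> srate S i integrable_on {0..T} \<and> prate S i integrable_on {0..T}"
  unfolding valid_sched_def by auto

lemma vs_avail: "valid_sched p D S \<Longrightarrow> i < length D \<Longrightarrow> 0 < srate S i t + prate S i t \<Longrightarrow> available D S i t"
  unfolding valid_sched_def by auto

lemma vs_sum_le: "valid_sched p D S \<Longrightarrow> i < length D \<Longrightarrow> srate S i t + prate S i t \<le> real p"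
proof -
  assume v: "valid_sched p D S" and i: "i < length D"
  have "srate S i t + prate S i t = (\<Sum>j\<in>{i}. srate S j t + prate S j t)" by simp
  also have "\<dots> \<le> (\<Sum>j<length D. srate S j t + prate S j t)"
    by (rule sum_mono2) (use i vs_nonneg[OF v] in \<open>auto intro: add_nonneg_nonneg\<close>)
  also have "\<dots> \<le> real p" using v unfolding valid_sched_def by auto
  finally show ?thesis .
qed

lemma vs_job: "valid_sched p D S \<Longrightarrow> i < length D \<Longrightarrow>
   ((\<forall>t. prate S i t = 0) \<and> completes_at (srate S i) (ser_work (D!i)) (compl S i)) \<or>
   ((\<forall>t. srate S i t = 0) \<and> completes_at (prate S i) (par_work (D!i)) (compl S i))"
  unfolding valid_sched_def by auto

lemma ser_pos: "valid_dtap p D \<Longrightarrow> i < length D \<Longrightarrow> 0 < ser_work (D!i)"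
  unfolding valid_dtap_def by auto

lemma ser_le_par: "valid_dtap p D \<Longrightarrow> i < length D \<Longrightarrow> ser_work (D!i) \<le> par_work (D!i)"
proof -
  assume "valid_dtap p D" "i < length D"
  then have "0 < ser_work (D!i)" "1 \<le> par_work (D!i) / ser_work (D!i)" unfolding valid_dtap_def by auto
  then show ?thesis by (simp add: le_divide_eq)
qed

lemma vs_total_int: "valid_dtap p D \<Longrightarrow> valid_sched p D S \<Longrightarrow> i < length D \<Longrightarrow>
   ser_work (D!i) \<le> integral {0..compl S i} (\<lambda>t. srate S i t + prate S i t)"
proof -
  assume vd: "valid_dtap p D" and v: "valid_sched p D S" and i: "i < length D"
  from vs_job[OF v i] show ?thesis
  proof
    assume a: "(\<forall>t. prate S i t = 0) \<and> completes_at (srate S i) (ser_work (D!i)) (compl S i)"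
    then have "(\<lambda>t. srate S i t + prate S i t) = srate S i" by auto
    then show ?thesis using a unfolding completes_at_def by auto
  next
    assume a: "(\<forall>t. srate S i t = 0) \<and> completes_at (prate S i) (par_work (D!i)) (compl S i)"
    then have "(\<lambda>t. srate S i t + prate S i t) = prate S i" by auto
    then show ?thesis using a ser_le_par[OF vd i] unfolding completes_at_def by auto
  qed
qed

lemma valid_av_lt:
  assumes vd: "valid_dtap p D" and v: "valid_sched p D S" and i: "i < length D"
  shows "av D (compl S) i < compl S i"
proof (rule ccontr)
  assume "\<not> ?thesis"
  then have ca: "compl S i \<le> av D (compl S) i" by simp
  have f: "finite (deps (D!i))" using wfD_fin[OF valid_wfD[OF vd] i] .
  have z: "srate S i t + prate S i t = 0" if "t \<in> {0..compl S i} - {compl S i}" for t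
  proof (rule ccontr)
    assume "srate S i t + prate S i t \<noteq> 0"
    then have "0 < srate S i t + prate S i t" using vs_nonneg[OF v i, of t] by auto
    then have "available D S i t" by (rule vs_avail[OF v i])
    then have "av D (compl S) i \<le> t" using available_iff[OF f] by auto
    then show False using that ca by auto
  qed
  have "integral {0..compl S i} (\<lambda>t. srate S i t + prate S i t) = integral {0..compl S i} (\<lambda>_. 0::real)"
    by (rule integral_spike[where S="{compl S i}"]) (use z in auto)
  then show False using vs_total_int[OF vd v i] ser_pos[OF vd i] by simp
qed

lemma compl_pos: "valid_dtap p D \<Longrightarrow> valid_sched p D S \<Longrightarrow> i < length D \<Longrightarrow> 0 < compl S i"
proof -
  assume a: "valid_dtap p D" "valid_sched p D S" "i < length D"
  have "0 \<le> release (D!i)" using a unfolding valid_dtap_def by auto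
  moreover have "release (D!i) \<le> av D (compl S) i" using av_ge_rel wfD_fin[OF valid_wfD[OF a(1)] a(3)] by auto
  ultimately show ?thesis using valid_av_lt[OF a] by auto
qed

lemma rel_nonneg: "valid_dtap p D \<Longrightarrow> i < length D \<Longrightarrow> 0 \<le> release (D!i)"
  unfolding valid_dtap_def by auto

lemma Aset_sub: "valid_dtap p D \<Longrightarrow> i < length D \<Longrightarrow> Aset D S i \<subseteq> {0..compl S i}"
proof
  fix t assume a: "valid_dtap p D" "i < length D" "t \<in> Aset D S i"
  then have "release (D!i) < t" "t < compl S i" unfolding Aset_def alive_def available_def by auto
  then show "t \<in> {0..compl S i}" using rel_nonneg[OF a(1,2)] by auto
qed

lemma Oset_sub: "valid_dtap p D \<Longrightarrow> Oset D S \<subseteq> {0..Max (insert 0 (compl S ` {..<length D}))}"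
proof
  fix t assume vd: "valid_dtap p D" and t: "t \<in> Oset D S"
  then obtain i where i: "i < length D" "alive D S i t" unfolding Oset_def by auto
  have "compl S i \<le> Max (insert 0 (compl S ` {..<length D}))" by (rule Max_ge) (use i in auto)
  moreover have "release (D!i) < t" "t < compl S i" using i unfolding alive_def available_def by auto
  ultimately show "t \<in> {0..Max (insert 0 (compl S ` {..<length D}))}"
    using rel_nonneg[OF vd i(1)] by auto
qed



lemma job_bound:
  assumes vd: "valid_dtap p D" and v: "valid_sched p D S" and i: "i < length D"
    and r: "r = srate S i \<or> r = prate S i" and rb: "\<And>t. r t \<le> b" and b: "0 \<le> b"
    and ca: "completes_at r w (compl S i)"
  shows "w \<le> b * mu (Aset D S i)"
proof -
  have w: "wfD D" using valid_wfD[OF vd] .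
  have f: "finite (deps (D!i))" using wfD_fin[OF w i] .
  define c where "c = compl S i"
  define X where "X = Aset D S i \<union> {c}"
  have Xb: "X \<in> sets borel" unfolding X_def using Aset_borel[OF w i] by simp
  have rnn: "0 \<le> r t" for t using r vs_nonneg[OF v i, of t] by auto
  have ri: "r integrable_on {0..T}" for T using r vs_int[OF v i, of T] by auto
  have I1: "(\<Sum>j\<in>{i}. integral {0..c} r) \<le> b * mu (X \<inter> {0..c})"
  proof (rule sum_int_le[where c="\<lambda>_. c" and r="\<lambda>_. r"])
    fix t assume t: "t \<in> {0..c}"
    show "(\<Sum>j\<in>{i}. if t \<le> c then r t else 0) \<le> b * indicator X t"
    proof (cases "t = c")
      case True then show ?thesis using rb by (simp add: X_def)
    next
      case False
      show ?thesis
      proof (cases "0 < r t")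
        case True
        then have "0 < srate S i t + prate S i t" using r vs_nonneg[OF v i, of t] by auto
        then have "available D S i t" by (rule vs_avail[OF v i])
        then have "t \<in> X" using t False unfolding X_def Aset_def alive_def c_def by auto
        then show ?thesis using rb t by simp
      next
        case False
        then show ?thesis using b rnn[of t] by (simp add: indicator_def)
      qed
    qed
  next
    show "finite {i}" by simp
    show "\<And>j T. j \<in> {i} \<Longrightarrow> r integrable_on {0..T}" using ri by blast
    show "\<And>j. j \<in> {i} \<Longrightarrow> c \<le> c" by simp
    show "X \<in> sets borel" by (rule Xb)
  qed
  have I2: "integral {0..c} r = w" using ca unfolding completes_at_def c_def by auto
  have I3: "mu (X \<inter> {0..c}) \<le> mu (Aset D S i)"
  proof -
    have "X \<subseteq> {0..c}" using Aset_sub[OF vd i, of S] compl_pos[OF vd v i] unfolding X_def c_def by auto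
    then have "X \<inter> {0..c} = X" by blast
    then have "mu (X \<inter> {0..c}) \<le> mu X" by simp
    also have "mu X \<le> mu (Aset D S i)" unfolding X_def by (rule mu_un_fin[OF Aset_borel[OF w i]]) auto
    finally show ?thesis .
  qed
  have "w \<le> b * mu (X \<inter> {0..c})" using I1 I2 by simp
  also have "\<dots> \<le> b * mu (Aset D S i)" by (rule mult_left_mono[OF I3 b])
  finally show ?thesis .
qed

lemma opt_ser_bound:
  assumes vd: "valid_dtap p D" and v: "valid_sched p D S" and i: "i < length D" and p1: "1 \<le> p"
    and ser: "isser p D i"
  shows "ser_work (D!i) \<le> sqrt (real p) * mu (Aset D S i)"
proof -
  have sp: "1 \<le> sqrt (real p)" using p1 by simp
  have m0: "0 \<le> mu (Aset D S i)" by simp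
  from vs_job[OF v i] show ?thesis
  proof
    assume a: "(\<forall>t. prate S i t = 0) \<and> completes_at (srate S i) (ser_work (D!i)) (compl S i)"
    have "ser_work (D!i) \<le> 1 * mu (Aset D S i)"
      by (rule job_bound[OF vd v i _ _ _ conjunct2[OF a]]) (use vs_nonneg[OF v i] in auto)
    also have "\<dots> \<le> sqrt (real p) * mu (Aset D S i)" using mult_right_mono[OF sp m0] by simp
    finally show ?thesis .
  next
    assume a: "(\<forall>t. srate S i t = 0) \<and> completes_at (prate S i) (par_work (D!i)) (compl S i)"
    have "par_work (D!i) \<le> real p * mu (Aset D S i)"
    proof (rule job_bound[OF vd v i _ _ _ conjunct2[OF a]])
      fix t show "prate S i t \<le> real p" using vs_sum_le[OF v i, of t] vs_nonneg[OF v i, of t] by auto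
    qed auto
    moreover have "sqrt (real p) * ser_work (D!i) \<le> par_work (D!i)" using ser unfolding isser_def .
    ultimately have "sqrt (real p) * ser_work (D!i) \<le> sqrt (real p) * (sqrt (real p) * mu (Aset D S i))"
      by (simp add: mult.assoc[symmetric])
    then show ?thesis using sp by simp
  qed
qed

lemma opt_total:
  assumes vd: "valid_dtap p D" and v: "valid_sched p D S"
  shows "(\<Sum>i<length D. ser_work (D!i)) \<le> real p * mu (Oset D S)"
proof -
  have w: "wfD D" using valid_wfD[OF vd] .
  define n where "n = length D"
  define M where "M = Max (insert 0 (compl S ` {..<n}))"
  define X where "X = Oset D S \<union> compl S ` {..<n}"
  have cM: "compl S i \<le> M" if "i < n" for i unfolding M_def by (rule Max_ge) (use that in auto)
  have M0: "0 \<le> M" unfolding M_def by (rule Max_ge) auto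
  have Xb: "X \<in> sets borel" unfolding X_def using Oset_borel[OF w] fin_borel by auto
  have OM: "Oset D S \<subseteq> {0..M}" using Oset_sub[OF vd] unfolding M_def n_def .
  have XM: "X \<subseteq> {0..M}" unfolding X_def using OM cM compl_pos[OF vd v] by (auto simp: n_def less_imp_le)
  have "(\<Sum>i<n. ser_work (D!i)) \<le> (\<Sum>i<n. integral {0..compl S i} (\<lambda>t. srate S i t + prate S i t))"
    by (rule sum_mono) (use vs_total_int[OF vd v] n_def in auto)
  also have "\<dots> \<le> real p * mu (X \<inter> {0..M})"
  proof (rule sum_int_le[where r="\<lambda>i t. srate S i t + prate S i t" and c="compl S"])
    fix t assume t: "t \<in> {0..M}"
    show "(\<Sum>i<n. if t \<le> compl S i then srate S i t + prate S i t else 0) \<le> real p * indicator X t"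
    proof (cases "t \<in> X")
      case True
      have "(\<Sum>i<n. if t \<le> compl S i then srate S i t + prate S i t else 0) \<le> (\<Sum>i<n. srate S i t + prate S i t)"
        by (rule sum_mono) (use vs_nonneg[OF v] n_def in \<open>auto intro: add_nonneg_nonneg\<close>)
      also have "\<dots> \<le> real p" using v unfolding valid_sched_def n_def by auto
      finally show ?thesis using True by simp
    next
      case False
      have "(if t \<le> compl S i then srate S i t + prate S i t else 0) = 0" if i: "i < n" for i
      proof (cases "t \<le> compl S i")
        case True
        then have tl: "t < compl S i" using False i unfolding X_def by auto
        show ?thesis
        proof (rule ccontr)
          assume "(if t \<le> compl S i then srate S i t + prate S i t else 0) \<noteq> 0"
          then have "0 < srate S i t + prate S i t" using True vs_nonneg[OF v, of i t] i n_def by auto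
          then have "available D S i t" using vs_avail[OF v] i n_def by auto
          then have "t \<in> Oset D S" using tl i unfolding Oset_def alive_def n_def by auto
          then show False using False unfolding X_def by auto
        qed
      qed auto
      then show ?thesis using False by simp
    qed
  next
    show "finite {..<n}" by simp
    show "\<And>i T. i \<in> {..<n} \<Longrightarrow> (\<lambda>t. srate S i t + prate S i t) integrable_on {0..T}"
    proof -
      fix i T assume "i \<in> {..<n}"
      then have "srate S i integrable_on {0..T}" "prate S i integrable_on {0..T}" using vs_int[OF v] n_def by auto
      then show "(\<lambda>t. srate S i t + prate S i t) integrable_on {0..T}" by (rule integrable_add)
    qed
    show "\<And>i. i \<in> {..<n} \<Longrightarrow> compl S i \<le> M" using cM by blast
    show "X \<in> sets borel" by (rule Xb)
  qed
  also have "mu (X \<inter> {0..M}) \<le> mu (Oset D S)"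
  proof -
    have "X \<inter> {0..M} = X" using XM by auto
    moreover have "mu X \<le> mu (Oset D S)" unfolding X_def by (rule mu_un_fin[OF Oset_borel[OF w]]) auto
    ultimately show ?thesis by simp
  qed
  then have "real p * mu (X \<inter> {0..M}) \<le> real p * mu (Oset D S)" by (simp add: mult_left_mono)
  finally show ?thesis unfolding n_def .
qed



definition Nset :: "nat \<Rightarrow> task list \<Rightarrow> (nat \<Rightarrow> real) \<Rightarrow> real set" where
  "Nset p D c = {t. (\<exists>i<length D. act D c i t) \<and> tot p D c t < real p}"

definition Bset :: "nat \<Rightarrow> task list \<Rightarrow> (nat \<Rightarrow> real) \<Rightarrow> real set" where
  "Bset p D c = {t. (\<exists>i<length D. act D c i t) \<and> tot p D c t = real p}"

lemma tot_meas[measurable]: "tot p D c \<in> borel_measurable borel"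
  unfolding tot_def by (rule borel_measurable_sum) (rule rt_meas)

lemma Nset_borel: "Nset p D c \<in> sets borel"
  unfolding Nset_def act_def by measurable

lemma Bset_borel: "Bset p D c \<in> sets borel"
  unfolding Bset_def act_def by measurable

lemma Aset_sub_O: "i < length D \<Longrightarrow> Aset D S i \<subseteq> Oset D S"
  unfolding Aset_def Oset_def by auto

lemma bnd_Ico: "A \<subseteq> {a..<b::real} \<Longrightarrow> bounded A"
  by (rule bounded_subset[of "{a..<b}"]) auto

locale ctx =
  fixes p :: nat and D :: "task list" and c :: "nat \<Rightarrow> real"
  assumes vd: "valid_dtap p D" and p1: "1 \<le> p" and sol: "Sol p D c"
begin

lemma vmk: "valid_sched p D (mk p D c)" by (rule mk_valid[OF vd sol])

lemma w: "wfD D" by (rule valid_wfD[OF vd])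

lemma av_lt: "i < length D \<Longrightarrow> av D c i < c i"
  using valid_av_lt[OF vd vmk] compl_mk by metis

lemma av_nonneg: "i < length D \<Longrightarrow> 0 \<le> av D c i"
  using av_ge_rel[OF wfD_fin[OF w]] rel_nonneg[OF vd] by (meson order_trans)

lemma act_nonneg: "act D c i t \<Longrightarrow> 0 < t"
  unfolding act_def using av_nonneg by fastforce

lemma wk_le: "i < length D \<Longrightarrow> wk p D i \<le> sqrt (real p) * ser_work (D!i)"
proof -
  assume i: "i < length D"
  have sp: "1 \<le> sqrt (real p)" using p1 by simp
  have s0: "0 < ser_work (D!i)" using ser_pos[OF vd i] .
  show ?thesis
  proof (cases "isser p D i")
    case True
    then show ?thesis unfolding wk_def using mult_right_mono[OF sp, of "ser_work (D!i)"] s0 by simp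
  next
    case False
    then show ?thesis unfolding wk_def isser_def by simp
  qed
qed

lemma busy_bound:
  assumes vS: "valid_sched p D S"
  shows "mu (Bset p D c) \<le> sqrt (real p) * mu (Oset D S)"
proof -
  define n where "n = length D"
  define M where "M = Max (insert 0 (c ` {..<n}))"
  have cM: "c i \<le> M" if "i < n" for i unfolding M_def by (rule Max_ge) (use that in auto)
  have BM: "Bset p D c \<subseteq> {0..M}"
  proof
    fix t assume "t \<in> Bset p D c"
    then obtain i where i: "i < n" "act D c i t" unfolding Bset_def n_def by auto
    then show "t \<in> {0..M}" using act_nonneg[OF i(2)] cM[OF i(1)] unfolding act_def by auto
  qed
  have "real p * mu (Bset p D c \<inter> {0..M}) \<le> (\<Sum>i<n. integral {0..c i} (rt p D c i))"
  proof (rule sum_int_ge[where r="rt p D c" and c=c])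
    fix t assume t: "t \<in> {0..M}"
    show "real p * indicator (Bset p D c) t \<le> (\<Sum>i<n. if t \<le> c i then rt p D c i t else 0)"
    proof (cases "t \<in> Bset p D c")
      case True
      have "(\<Sum>i<n. if t \<le> c i then rt p D c i t else 0) = (\<Sum>i<n. rt p D c i t)"
      proof (rule sum.cong)
        fix i assume "i \<in> {..<n}"
        show "(if t \<le> c i then rt p D c i t else 0) = rt p D c i t"
        proof (cases "t \<le> c i")
          case False
          then have "\<not> act D c i t" unfolding act_def by auto
          then have "rt p D c i t = 0" unfolding rt_def by simp
          then show ?thesis by simp
        qed simp
      qed simp
      also have "\<dots> = real p" using True unfolding Bset_def tot_def n_def by auto
      finally show ?thesis using True by simp
    next
      case False
      have "0 \<le> (\<Sum>i<n. if t \<le> c i then rt p D c i t else 0)"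
        by (rule sum_nonneg) (simp add: rt_nonneg)
      then show ?thesis using False by simp
    qed
  next
    show "finite {..<n}" by simp
    show "\<And>i T. i \<in> {..<n} \<Longrightarrow> rt p D c i integrable_on {0..T}" by (rule rt_integrable)
    show "\<And>i. i \<in> {..<n} \<Longrightarrow> c i \<le> M" using cM by blast
    show "Bset p D c \<in> sets borel" by (rule Bset_borel)
  qed
  also have "\<dots> = (\<Sum>i<n. wk p D i)"
    by (rule sum.cong) (use sol n_def in \<open>auto simp: Sol_def completes_at_def\<close>)
  also have "\<dots> \<le> (\<Sum>i<n. sqrt (real p) * ser_work (D!i))"
    by (rule sum_mono) (use wk_le n_def in auto)
  also have "\<dots> = sqrt (real p) * (\<Sum>i<n. ser_work (D!i))" by (simp add: sum_distrib_left)
  also have "\<dots> \<le> sqrt (real p) * (real p * mu (Oset D S))"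
    by (rule mult_left_mono) (use opt_total[OF vd vS] n_def in auto)
  finally have "real p * mu (Bset p D c) \<le> real p * (sqrt (real p) * mu (Oset D S))"
    using BM by (simp add: Int_absorb2 mult.left_commute)
  then show ?thesis using p1 by simp
qed

lemma chain_piece:
  assumes vS: "valid_sched p D S" and k: "k < length D"
  shows "mu (Nset p D c \<inter> {av D c k..<c k}) \<le> sqrt (real p) * mu (Aset D S k)"
proof -
  define a where "a = av D c k"
  define Y where "Y = Nset p D c \<inter> {a<..<c k}"
  have Yb: "Y \<in> sets borel" unfolding Y_def using Nset_borel by simp
  have a0: "0 \<le> a" unfolding a_def using av_nonneg[OF k] .
  have sub: "Nset p D c \<inter> {a..<c k} \<subseteq> Y \<union> {a}" unfolding Y_def by auto
  have m1: "mu (Nset p D c \<inter> {a..<c k}) \<le> mu Y"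
  proof -
    have "mu (Nset p D c \<inter> {a..<c k}) \<le> mu (Y \<union> {a})"
      by (rule mu_mono[OF _ _ _ sub]) (use Yb Nset_borel in \<open>auto simp: Y_def intro!: bnd_Ico[of _ a "c k"]\<close>)
    also have "\<dots> \<le> mu Y" by (rule mu_un_fin[OF Yb]) simp
    finally show ?thesis .
  qed
  have m0: "0 \<le> mu (Aset D S k)" by simp
  show ?thesis
  proof (cases "isser p D k")
    case True
    have "1 * mu (Y \<inter> {0..c k}) \<le> (\<Sum>j\<in>{k}. integral {0..c k} (rt p D c k))"
    proof (rule sum_int_ge[where r="\<lambda>_. rt p D c k" and c="\<lambda>_. c k"])
      fix t assume t: "t \<in> {0..c k}"
      show "1 * indicator Y t \<le> (\<Sum>j\<in>{k}. if t \<le> c k then rt p D c k t else 0)"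
      proof (cases "t \<in> Y")
        case True
        then have "act D c k t" "tot p D c t < real p" unfolding Y_def Nset_def act_def a_def using k by auto
        then have "rt p D c k t = 1" using busy_or_full by blast
        then show ?thesis using True t by simp
      next
        case False then show ?thesis using t by (simp add: rt_nonneg)
      qed
    next
      show "finite {k}" by simp
      show "\<And>i T. i \<in> {k} \<Longrightarrow> rt p D c k integrable_on {0..T}" by (rule rt_integrable)
      show "\<And>i. i \<in> {k} \<Longrightarrow> c k \<le> c k" by simp
      show "Y \<in> sets borel" by (rule Yb)
    qed
    moreover have "Y \<inter> {0..c k} = Y" unfolding Y_def using a0 by auto
    moreover have "integral {0..c k} (rt p D c k) = ser_work (D!k)"
      using sol k True unfolding Sol_def completes_at_def wk_def by auto
    ultimately have "mu Y \<le> ser_work (D!k)" by simp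
    also have "\<dots> \<le> sqrt (real p) * mu (Aset D S k)" by (rule opt_ser_bound[OF vd vS k p1 True])
    finally show ?thesis using m1 unfolding a_def by simp
  next
    case False
    have "Y = {}"
    proof (rule ccontr)
      assume "Y \<noteq> {}"
      then obtain t where "t \<in> Y" by auto
      then have "act D c k t" "tot p D c t < real p" unfolding Y_def Nset_def act_def a_def using k by auto
      then show False using busy_or_full False by blast
    qed
    then have "mu (Nset p D c \<inter> {a..<c k}) \<le> 0" using m1 by simp
    then show ?thesis using m0 p1 unfolding a_def by (simp add: order_trans)
  qed
qed

end



abbreviation Rel :: "task list \<Rightarrow> (nat \<times> nat) set" where
  "Rel D \<equiv> {(j, i). i < length D \<and> j \<in> deps (D!i)}"

lemma idle:
  assumes vd: "valid_dtap p D" and vS: "valid_sched p D S" and u: "u \<notin> Oset D S"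
  shows "j < length D \<Longrightarrow> (\<forall>y. (y, j) \<in> (Rel D)\<^sup>* \<longrightarrow> release (D!y) < u) \<Longrightarrow> compl S j \<le> u"
proof (induction j rule: wf_induct_rule[OF wf_R[OF vd]])
  case (1 j)
  have w: "wfD D" using valid_wfD[OF vd] .
  have dd: "compl S d \<le> u" if d: "d \<in> deps (D!j)" for d
  proof -
    have R: "(d, j) \<in> Rel D" using d 1(2) by auto
    have "d < length D" using wfD_dep[OF w 1(2) d] .
    moreover have "\<forall>y. (y, d) \<in> (Rel D)\<^sup>* \<longrightarrow> release (D!y) < u"
      using 1(3) R by (meson rtrancl_into_rtrancl)
    ultimately show ?thesis using 1(1) R by blast
  qed
  have "release (D!j) < u" using 1(3) by auto
  then have "available D S j u" unfolding available_def using dd by auto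
  then show ?case using u 1(2) unfolding Oset_def alive_def by force
qed

context ctx
begin

lemma anc:
  assumes j: "j < length D" and y: "(y, j) \<in> (Rel D)\<^sup>*"
  shows "y < length D \<and> av D c y \<le> av D c j"
  using y
proof (induction rule: converse_rtrancl_induct)
  case base
  then show ?case using j by simp
next
  case (step y z)
  then have z: "z < length D" "y \<in> deps (D!z)" by auto
  have yn: "y < length D" using wfD_dep[OF w z] .
  have "av D c y < c y" using av_lt[OF yn] .
  also have "c y \<le> av D c z" using av_ge_dep[OF wfD_fin[OF w z(1)] z(2)] .
  finally show ?case using step yn by auto
qed

lemma anc_rel: "j < length D \<Longrightarrow> av D c j < u \<Longrightarrow> \<forall>y. (y, j) \<in> (Rel D)\<^sup>* \<longrightarrow> release (D!y) < u"
proof (intro allI impI)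
  fix y assume j: "j < length D" "av D c j < u" and y: "(y, j) \<in> (Rel D)\<^sup>*"
  have "y < length D" "av D c y \<le> av D c j" using anc[OF j(1) y] by auto
  then show "release (D!y) < u" using av_ge_rel[OF wfD_fin[OF w]] j(2) by (meson le_less_trans order_trans)
qed

end



lemma mu_mono_Ico: "X \<in> sets borel \<Longrightarrow> B \<in> sets borel \<Longrightarrow> X \<subseteq> B \<inter> {a..<b} \<Longrightarrow> mu X \<le> mu (B \<inter> {a..<b})"
  by (rule mu_mono) (auto intro: bnd_Ico[of _ a b])

context ctx
begin

lemma chain_claim:
  assumes vS: "valid_sched p D S"
  shows "k < length D \<Longrightarrow> \<exists>r. (\<exists>j<length D. r = release (D!j)) \<and> r \<le> av D c k \<and> r \<le> compl S k \<and>
     (\<forall>u. r \<le> u \<longrightarrow> u \<notin> Oset D S \<longrightarrow>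
        (av D c k < u \<longrightarrow> compl S k \<le> u \<and>
            mu (Nset p D c \<inter> {r..<min u (c k)}) \<le> sqrt (real p) * mu (Oset D S \<inter> {r..<compl S k})) \<and>
        (u \<le> av D c k \<longrightarrow> mu (Nset p D c \<inter> {r..<u}) \<le> sqrt (real p) * mu (Oset D S \<inter> {r..<u})))"
proof (induction k rule: measure_induct_rule[where f="\<lambda>k. card {j. j < length D \<and> av D c j < av D c k}"])
  case (less k)
  note k = less.prems
  define N where "N = Nset p D c"
  define OS where "OS = Oset D S"
  define sp where "sp = sqrt (real p)"
  have sp1: "1 \<le> sp" unfolding sp_def using p1 by simp
  have Nb: "N \<in> sets borel" unfolding N_def by (rule Nset_borel)
  have Ob: "OS \<in> sets borel" unfolding OS_def by (rule Oset_borel[OF w])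
  have fk: "finite (deps (D!k))" using wfD_fin[OF w k] .
  have avS: "av D (compl S) k < compl S k" using valid_av_lt[OF vd vS k] .
  have relS: "release (D!k) \<le> av D (compl S) k" using av_ge_rel[OF fk] .
  have idlek: "compl S k \<le> u" if "u \<notin> OS" "av D c k < u" for u
    using idle[OF vd vS _ k anc_rel[OF k that(2)]] that(1) unfolding OS_def by blast
  have Ak: "Aset D S k \<subseteq> OS \<inter> {release (D!k)..<compl S k}"
    using Aset_sub_O[OF k] unfolding OS_def Aset_def alive_def available_def by auto
  have Akb: "Aset D S k \<in> sets borel" using Aset_borel[OF w k] .
  have piece: "mu (N \<inter> {av D c k..<c k}) \<le> sp * mu (Aset D S k)"
    unfolding N_def sp_def using chain_piece[OF vS k] .
  from av_cases[OF fk, of c] show ?case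
  proof
    assume base: "av D c k = release (D!k)"
    define r where "r = release (D!k)"
    show ?thesis
    proof (rule exI[of _ r], intro conjI allI impI)
      show "\<exists>j<length D. r = release (D!j)" using k r_def by auto
      show "r \<le> av D c k" using base r_def by simp
      show "r \<le> compl S k" using avS relS r_def by simp
    next
      fix u assume u: "r \<le> u" "u \<notin> Oset D S" "av D c k < u"
      show "compl S k \<le> u" using idlek u unfolding OS_def by auto
    next
      fix u assume u: "r \<le> u" "u \<notin> Oset D S" "av D c k < u"
      have "mu (N \<inter> {r..<min u (c k)}) \<le> mu (N \<inter> {av D c k..<c k})"
        by (rule mu_mono_Ico) (use Nb base r_def in auto)
      also have "\<dots> \<le> sp * mu (Aset D S k)" by (rule piece)
      also have "\<dots> \<le> sp * mu (OS \<inter> {r..<compl S k})"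
        by (rule mult_left_mono[OF mu_mono_Ico[OF Akb Ob]]) (use Ak r_def sp1 in auto)
      finally show "mu (Nset p D c \<inter> {r..<min u (c k)}) \<le> sqrt (real p) * mu (Oset D S \<inter> {r..<compl S k})"
        unfolding N_def OS_def sp_def .
    next
      fix u assume u: "r \<le> u" "u \<notin> Oset D S" "u \<le> av D c k"
      then have "u = r" using base r_def by simp
      then show "mu (Nset p D c \<inter> {r..<u}) \<le> sqrt (real p) * mu (Oset D S \<inter> {r..<u})" by simp
    qed
  next
    assume "\<exists>d\<in>deps (D!k). av D c k = c d"
    then obtain d where d: "d \<in> deps (D!k)" "av D c k = c d" by auto
    have dn: "d < length D" using wfD_dep[OF w k d(1)] .
    have add: "av D c d < av D c k" using av_lt[OF dn] d(2) by simp
    have lt: "card {j. j < length D \<and> av D c j < av D c d} < card {j. j < length D \<and> av D c j < av D c k}"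
    proof (rule psubset_card_mono)
      show "finite {j. j < length D \<and> av D c j < av D c k}" by simp
      show "{j. j < length D \<and> av D c j < av D c d} \<subset> {j. j < length D \<and> av D c j < av D c k}"
        using add dn by auto
    qed
    from less.IH[OF lt dn] obtain r where
      rj: "\<exists>j<length D. r = release (D!j)" and rad: "r \<le> av D c d" and rcd: "r \<le> compl S d" and
      IH: "\<And>u. r \<le> u \<Longrightarrow> u \<notin> Oset D S \<Longrightarrow>
        (av D c d < u \<longrightarrow> compl S d \<le> u \<and>
            mu (Nset p D c \<inter> {r..<min u (c d)}) \<le> sqrt (real p) * mu (Oset D S \<inter> {r..<compl S d})) \<and>
        (u \<le> av D c d \<longrightarrow> mu (Nset p D c \<inter> {r..<u}) \<le> sqrt (real p) * mu (Oset D S \<inter> {r..<u}))"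
      by blast
    have cSd: "compl S d \<le> av D (compl S) k" using av_ge_dep[OF fk d(1)] .
    have Ak2: "Aset D S k \<subseteq> OS \<inter> {compl S d..<compl S k}"
      using Aset_sub_O[OF k] d(1) unfolding OS_def Aset_def alive_def available_def by auto
    show ?thesis
    proof (rule exI[of _ r], intro conjI allI impI)
      show "\<exists>j<length D. r = release (D!j)" by (rule rj)
      show "r \<le> av D c k" using rad add by simp
      show "r \<le> compl S k" using rcd cSd avS by simp
    next
      fix u assume u: "r \<le> u" "u \<notin> Oset D S" "av D c k < u"
      show "compl S k \<le> u" using idlek u unfolding OS_def by auto
    next
      fix u assume u: "r \<le> u" "u \<notin> Oset D S" "av D c k < u"
      have IHu: "compl S d \<le> u" "mu (N \<inter> {r..<min u (c d)}) \<le> sp * mu (OS \<inter> {r..<compl S d})"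
        using IH[OF u(1,2)] add u(3) unfolding N_def OS_def sp_def by auto
      have mcd: "min u (c d) = c d" using u(3) d(2) by simp
      have sub: "N \<inter> {r..<min u (c k)} \<subseteq> (N \<inter> {r..<c d}) \<union> (N \<inter> {av D c k..<c k})" using d(2) by auto
      have "mu (N \<inter> {r..<min u (c k)}) \<le> mu ((N \<inter> {r..<c d}) \<union> (N \<inter> {av D c k..<c k}))"
        by (rule mu_mono[OF _ _ _ sub]) (use Nb rad add in \<open>auto simp: less_max_iff_disj intro!: bnd_Ico[of _ r "max (c d) (c k)"]\<close>)
      also have "\<dots> \<le> mu (N \<inter> {r..<c d}) + mu (N \<inter> {av D c k..<c k})"
        by (rule mu_un) (use Nb in auto)
      also have "\<dots> \<le> sp * mu (OS \<inter> {r..<compl S d}) + sp * mu (Aset D S k)"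
        using IHu(2) piece mcd by simp
      also have "\<dots> = sp * mu ((OS \<inter> {r..<compl S d}) \<union> Aset D S k)"
      proof -
        have "mu ((OS \<inter> {r..<compl S d}) \<union> Aset D S k) = mu (OS \<inter> {r..<compl S d}) + mu (Aset D S k)"
          by (rule mu_disj) (use Ob Akb Ak2 in \<open>auto intro: bnd_Ico[of _ r "compl S d"] bnd_Ico[of _ "compl S d" "compl S k"]\<close>)
        then show ?thesis by (simp add: distrib_left)
      qed
      also have "\<dots> \<le> sp * mu (OS \<inter> {r..<compl S k})"
      proof (rule mult_left_mono)
        show "mu ((OS \<inter> {r..<compl S d}) \<union> Aset D S k) \<le> mu (OS \<inter> {r..<compl S k})"
          by (rule mu_mono_Ico) (use Ob Akb Ak2 rcd cSd avS in auto)
      qed (use sp1 in auto)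
      finally show "mu (Nset p D c \<inter> {r..<min u (c k)}) \<le> sqrt (real p) * mu (Oset D S \<inter> {r..<compl S k})"
        unfolding N_def OS_def sp_def .
    next
      fix u assume u: "r \<le> u" "u \<notin> Oset D S" "u \<le> av D c k"
      show "mu (Nset p D c \<inter> {r..<u}) \<le> sqrt (real p) * mu (Oset D S \<inter> {r..<u})"
      proof (cases "av D c d < u")
        case True
        then have IHu: "compl S d \<le> u" "mu (N \<inter> {r..<min u (c d)}) \<le> sp * mu (OS \<inter> {r..<compl S d})"
          using IH[OF u(1,2)] unfolding N_def OS_def sp_def by auto
        have "min u (c d) = u" using u(3) d(2) by simp
        then have "mu (N \<inter> {r..<u}) \<le> sp * mu (OS \<inter> {r..<compl S d})" using IHu(2) by simp
        also have "\<dots> \<le> sp * mu (OS \<inter> {r..<u})"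
          by (rule mult_left_mono[OF mu_mono_Ico]) (use Ob IHu(1) sp1 in auto)
        finally show ?thesis unfolding N_def OS_def sp_def .
      next
        case False
        then show ?thesis using IH[OF u(1,2)] by auto
      qed
    qed
  qed
qed

end



context ctx
begin

lemma chain_final:
  assumes vS: "valid_sched p D S" and k: "k < length D" and t: "av D c k < t" "t \<le> c k"
  shows "\<exists>r. (\<exists>j<length D. r = release (D!j)) \<and> r < t \<and>
           mu (Nset p D c \<inter> {r..<t}) \<le> sqrt (real p) * mu (Oset D S \<inter> {r..<t})"
proof -
  define N where "N = Nset p D c"
  define OS where "OS = Oset D S"
  define sp where "sp = sqrt (real p)"
  have sp1: "1 \<le> sp" unfolding sp_def using p1 by simp
  have Nb: "N \<in> sets borel" unfolding N_def by (rule Nset_borel)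
  have Ob: "OS \<in> sets borel" unfolding OS_def by (rule Oset_borel[OF w])
  obtain r where rj: "\<exists>j<length D. r = release (D!j)" and rak: "r \<le> av D c k" and
    C: "\<And>u. r \<le> u \<Longrightarrow> u \<notin> Oset D S \<Longrightarrow>
        (av D c k < u \<longrightarrow> compl S k \<le> u \<and>
            mu (Nset p D c \<inter> {r..<min u (c k)}) \<le> sqrt (real p) * mu (Oset D S \<inter> {r..<compl S k})) \<and>
        (u \<le> av D c k \<longrightarrow> mu (Nset p D c \<inter> {r..<u}) \<le> sqrt (real p) * mu (Oset D S \<inter> {r..<u}))"
    using chain_claim[OF vS k] by blast
  have rt: "r < t" using rak t by simp
  have Uc: "mu (N \<inter> {r..<u}) \<le> sp * mu (OS \<inter> {r..<u})" if u: "r \<le> u" "u \<le> t" "u \<notin> OS" for u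
  proof (cases "av D c k < u")
    case True
    then have h: "compl S k \<le> u" "mu (N \<inter> {r..<min u (c k)}) \<le> sp * mu (OS \<inter> {r..<compl S k})"
      using C[OF u(1)] u(3) unfolding N_def OS_def sp_def by auto
    have "min u (c k) = u" using u t by simp
    then have "mu (N \<inter> {r..<u}) \<le> sp * mu (OS \<inter> {r..<compl S k})" using h(2) by simp
    also have "\<dots> \<le> sp * mu (OS \<inter> {r..<u})"
      by (rule mult_left_mono[OF mu_mono_Ico]) (use Ob h(1) sp1 in auto)
    finally show ?thesis .
  next
    case False
    then show ?thesis using C[OF u(1)] u(3) unfolding N_def OS_def sp_def by auto
  qed
  define U where "U = {u. r \<le> u \<and> u \<le> t \<and> u \<notin> OS}"
  have "mu (N \<inter> {r..<t}) \<le> sp * mu (OS \<inter> {r..<t})"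
  proof (cases "U = {}")
    case True
    then have sub: "{r..<t} \<subseteq> OS" unfolding U_def by force
    have "mu (N \<inter> {r..<t}) \<le> mu ({r..<t})" by (rule mu_mono) (use Nb in auto)
    also have "\<dots> = mu (OS \<inter> {r..<t})" using sub by (simp add: Int_absorb1)
    also have "\<dots> \<le> sp * mu (OS \<inter> {r..<t})" using mult_right_mono[OF sp1, of "mu (OS \<inter> {r..<t})"] by simp
    finally show ?thesis .
  next
    case False
    have bdd: "bdd_above U" unfolding U_def by (rule bdd_aboveI[of _ t]) auto
    define s where "s = Sup U"
    have s_ub: "u \<le> s" if "u \<in> U" for u unfolding s_def by (rule cSup_upper[OF that bdd])
    have st: "s \<le> t" unfolding s_def by (rule cSup_least[OF False]) (auto simp: U_def)
    obtain u0 where "u0 \<in> U" using False by auto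
    then have rs: "r \<le> s" using s_ub[of u0] unfolding U_def by auto
    have gap: "{s<..<t} \<subseteq> OS"
    proof
      fix v assume v: "v \<in> {s<..<t}"
      show "v \<in> OS"
      proof (rule ccontr)
        assume "v \<notin> OS"
        then have "v \<in> U" using v rs unfolding U_def by auto
        then show False using s_ub[of v] v by auto
      qed
    qed
    have each: "mu (N \<inter> {r..<t}) \<le> sp * mu (OS \<inter> {r..<t}) + (s - u)" if uU: "u \<in> U" for u
    proof -
      have u: "r \<le> u" "u \<le> t" "u \<notin> OS" using uU unfolding U_def by auto
      have us: "u \<le> s" using s_ub[OF uU] .
      have "mu (N \<inter> {r..<t}) \<le> mu ((N \<inter> {r..<u}) \<union> {u..<t})"
        by (rule mu_mono) (use Nb in \<open>auto intro: bnd_Ico[of _ r t]\<close>)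
      also have "\<dots> \<le> mu (N \<inter> {r..<u}) + mu {u..<t}" by (rule mu_un) (use Nb in auto)
      also have "\<dots> = mu (N \<inter> {r..<u}) + (t - u)" using mu_Ico[OF u(2)] by simp
      also have "\<dots> \<le> sp * mu (OS \<inter> {r..<u}) + (t - u)" using Uc[OF u] by simp
      finally have A: "mu (N \<inter> {r..<t}) \<le> sp * mu (OS \<inter> {r..<u}) + (t - u)" .
      have "mu ((OS \<inter> {r..<u}) \<union> {s<..<t}) = mu (OS \<inter> {r..<u}) + mu {s<..<t}"
        by (rule mu_disj) (use Ob us in \<open>auto intro: bnd_Ico[of _ r u]\<close>)
      also have "mu {s<..<t} = t - s" using mu_Ioo[OF st] .
      finally have B1: "mu ((OS \<inter> {r..<u}) \<union> {s<..<t}) = mu (OS \<inter> {r..<u}) + (t - s)" .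
      have "mu ((OS \<inter> {r..<u}) \<union> {s<..<t}) \<le> mu (OS \<inter> {r..<t})"
        by (rule mu_mono_Ico) (use Ob gap rs u in auto)
      then have B: "mu (OS \<inter> {r..<u}) + (t - s) \<le> mu (OS \<inter> {r..<t})" using B1 by simp
      have "sp * (t - s) \<ge> t - s" using mult_right_mono[OF sp1, of "t - s"] st by simp
      then have "sp * mu (OS \<inter> {r..<u}) + sp * (t - s) \<le> sp * mu (OS \<inter> {r..<t})"
        using mult_left_mono[OF B, of sp] sp1 by (simp add: distrib_left)
      then show ?thesis using A \<open>sp * (t - s) \<ge> t - s\<close> by linarith
    qed
    show ?thesis
    proof (rule field_le_epsilon)
      fix e :: real assume e: "0 < e"
      have "s - e < Sup U" using e s_def by simp
      then obtain u where uU: "u \<in> U" and "s - e < u" using less_cSup_iff[OF False bdd] by blast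
      then show "mu (N \<inter> {r..<t}) \<le> sp * mu (OS \<inter> {r..<t}) + e" using each[OF uU] by linarith
    qed
  qed
  then show ?thesis using rj rt unfolding N_def OS_def sp_def by blast
qed

end



context ctx
begin

lemma global_bound:
  assumes vS: "valid_sched p D S"
  shows "mu (Nset p D c \<inter> {0..<T}) \<le> sqrt (real p) * mu (Oset D S \<inter> {0..<T})"
proof -
  define N where "N = Nset p D c"
  define OS where "OS = Oset D S"
  define sp where "sp = sqrt (real p)"
  have sp0: "0 \<le> sp" unfolding sp_def by simp
  have Nb: "N \<in> sets borel" unfolding N_def by (rule Nset_borel)
  have Ob: "OS \<in> sets borel" unfolding OS_def by (rule Oset_borel[OF w])
  define n where "n = length D"
  have main: "\<forall>T. card {j. j < n \<and> release (D!j) < T} = m \<longrightarrow> mu (N \<inter> {0..<T}) \<le> sp * mu (OS \<inter> {0..<T})" for m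
  proof (induction m rule: less_induct)
    case (less m)
    show ?case
    proof (intro allI impI)
      fix T assume cm: "card {j. j < n \<and> release (D!j) < T} = m"
      define KT where "KT = {k. k < n \<and> av D c k < T}"
      show "mu (N \<inter> {0..<T}) \<le> sp * mu (OS \<inter> {0..<T})"
      proof (cases "KT = {}")
        case True
        have "N \<inter> {0..<T} = {}"
        proof (rule ccontr)
          assume "N \<inter> {0..<T} \<noteq> {}"
          then obtain x i where "i < n" "act D c i x" "x < T" unfolding N_def Nset_def n_def by auto
          then have "i \<in> KT" unfolding KT_def act_def by auto
          then show False using True by auto
        qed
        then show ?thesis using sp0 by simp
      next
        case False
        have finK: "finite KT" unfolding KT_def by simp
        define t0 where "t0 = Max ((\<lambda>k. min (c k) T) ` KT)"
        have t0_ge: "min (c k) T \<le> t0" if "k \<in> KT" for k unfolding t0_def by (rule Max_ge) (use finK that in auto)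
        obtain k where kK: "k \<in> KT" and kt0: "t0 = min (c k) T"
        proof -
          have "t0 \<in> (\<lambda>k. min (c k) T) ` KT" unfolding t0_def by (rule Max_in) (use finK False in auto)
          then show ?thesis using that by auto
        qed
        have kn: "k < length D" using kK unfolding KT_def n_def by auto
        have akt: "av D c k < t0" using kK kt0 av_lt[OF kn] unfolding KT_def by auto
        have t0c: "t0 \<le> c k" "t0 \<le> T" using kt0 by auto
        from chain_final[OF vS kn akt t0c(1)] obtain r where
          rr: "(\<exists>j<length D. r = release (D!j)) \<and> r < t0 \<and>
           mu (Nset p D c \<inter> {r..<t0}) \<le> sqrt (real p) * mu (Oset D S \<inter> {r..<t0})" ..
        have rj: "\<exists>j<length D. r = release (D!j)" using rr by (rule conjunct1)
        have rt: "r < t0" using rr by (rule conjunct1[OF conjunct2])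
        have rb: "mu (N \<inter> {r..<t0}) \<le> sp * mu (OS \<inter> {r..<t0})"
          unfolding N_def OS_def sp_def using rr by (rule conjunct2[OF conjunct2])
        obtain j where j: "j < n" "r = release (D!j)" using rj n_def by auto
        have r0: "0 \<le> r" using rel_nonneg[OF vd] j n_def by auto
        have empty: "N \<inter> {t0..<T} = {}"
        proof (rule ccontr)
          assume "N \<inter> {t0..<T} \<noteq> {}"
          then obtain x i where x: "i < n" "act D c i x" "t0 \<le> x" "x < T" unfolding N_def Nset_def n_def by auto
          then have "i \<in> KT" unfolding KT_def act_def by auto
          then have "min (c i) T \<le> t0" by (rule t0_ge)
          then show False using x unfolding act_def by auto
        qed
        have sub: "{j. j < n \<and> release (D!j) < r} \<subseteq> {j. j < n \<and> release (D!j) < T}"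
        proof
          fix x assume "x \<in> {j. j < n \<and> release (D!j) < r}"
          then show "x \<in> {j. j < n \<and> release (D!j) < T}" using rt t0c(2) by simp
        qed
        have jin: "j \<in> {j. j < n \<and> release (D!j) < T}" using j(1) rt t0c(2) by (simp add: j(2)[symmetric])
        have jout: "j \<notin> {j. j < n \<and> release (D!j) < r}" by (simp add: j(2)[symmetric])
        have "card {j. j < n \<and> release (D!j) < r} < card {j. j < n \<and> release (D!j) < T}"
          by (rule psubset_card_mono) (use sub jin jout in auto)
        then have lt: "card {j. j < n \<and> release (D!j) < r} < m" using cm by simp
        have IH: "mu (N \<inter> {0..<r}) \<le> sp * mu (OS \<inter> {0..<r})" using less.IH[OF lt] by blast
        have "mu (N \<inter> {0..<T}) \<le> mu ((N \<inter> {0..<r}) \<union> (N \<inter> {r..<t0}))"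
        proof (rule mu_mono)
          show "N \<inter> {0..<T} \<in> sets borel" using Nb by simp
          show "(N \<inter> {0..<r}) \<union> (N \<inter> {r..<t0}) \<in> sets borel" using Nb by simp
          have "(N \<inter> {0..<r}) \<union> (N \<inter> {r..<t0}) \<subseteq> {0..<t0}" using r0 rt by auto
          then show "bounded ((N \<inter> {0..<r}) \<union> (N \<inter> {r..<t0}))" by (rule bnd_Ico)
          show "N \<inter> {0..<T} \<subseteq> (N \<inter> {0..<r}) \<union> (N \<inter> {r..<t0})"
          proof
            fix x assume x: "x \<in> N \<inter> {0..<T}"
            show "x \<in> (N \<inter> {0..<r}) \<union> (N \<inter> {r..<t0})"
            proof (cases "x < t0")
              case True then show ?thesis using x by auto
            next
              case False then have "x \<in> N \<inter> {t0..<T}" using x by auto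
              then show ?thesis using empty by blast
            qed
          qed
        qed
        also have "\<dots> \<le> mu (N \<inter> {0..<r}) + mu (N \<inter> {r..<t0})" by (rule mu_un) (use Nb in auto)
        also have "\<dots> \<le> sp * mu (OS \<inter> {0..<r}) + sp * mu (OS \<inter> {r..<t0})" using IH rb by simp
        also have "\<dots> = sp * mu ((OS \<inter> {0..<r}) \<union> (OS \<inter> {r..<t0}))"
        proof -
          have "mu ((OS \<inter> {0..<r}) \<union> (OS \<inter> {r..<t0})) = mu (OS \<inter> {0..<r}) + mu (OS \<inter> {r..<t0})"
          proof (rule mu_disj)
            show "OS \<inter> {0..<r} \<in> sets borel" "OS \<inter> {r..<t0} \<in> sets borel" using Ob by simp_all
            show "bounded (OS \<inter> {0..<r})" by (rule bnd_Ico[of _ 0 r]) auto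
            show "bounded (OS \<inter> {r..<t0})" by (rule bnd_Ico[of _ r t0]) auto
            show "OS \<inter> {0..<r} \<inter> (OS \<inter> {r..<t0}) = {}" by auto
          qed
          then show ?thesis by (simp add: distrib_left)
        qed
        also have "\<dots> \<le> sp * mu (OS \<inter> {0..<T})"
          by (rule mult_left_mono[OF mu_mono_Ico]) (use Ob sp0 r0 rt t0c in auto)
        finally show ?thesis .
      qed
    qed
  qed
  then show ?thesis unfolding N_def OS_def sp_def by blast
qed

lemma final_bound:
  assumes vS: "valid_sched p D S"
  shows "awake_time D (mk p D c) \<le> 2 * sqrt (real p) * awake_time D S"
proof -
  define N where "N = Nset p D c"
  define B where "B = Bset p D c"
  define OS where "OS = Oset D S"
  define sp where "sp = sqrt (real p)"
  define n where "n = length D"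
  define M where "M = Max (insert 0 (c ` {..<n}))"
  define F where "F = av D c ` {..<n}"
  have cM: "c i \<le> M" if "i < n" for i unfolding M_def by (rule Max_ge) (use that in auto)
  have sp0: "0 \<le> sp" unfolding sp_def by simp
  have Nb: "N \<in> sets borel" unfolding N_def by (rule Nset_borel)
  have Bb: "B \<in> sets borel" unfolding B_def by (rule Bset_borel)
  have Ob: "OS \<in> sets borel" unfolding OS_def by (rule Oset_borel[OF w])
  have Wb: "Oset D (mk p D c) \<in> sets borel" by (rule Oset_borel[OF w])
  have W_sub: "Oset D (mk p D c) \<subseteq> (N \<union> B) \<union> F"
  proof
    fix x assume "x \<in> Oset D (mk p D c)"
    then obtain i where i: "i < n" "alive D (mk p D c) i x" unfolding Oset_def n_def by auto
    have f: "finite (deps (D!i))" using wfD_fin[OF w] i n_def by auto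
    have h: "av D c i \<le> x" "x < c i" using i(2) unfolding alive_iff[OF f] compl_mk by auto
    show "x \<in> (N \<union> B) \<union> F"
    proof (cases "av D c i < x")
      case True
      then have "act D c i x" using h i n_def unfolding act_def by auto
      have ex: "\<exists>i<length D. act D c i x" using \<open>act D c i x\<close> i n_def by auto
      show ?thesis
      proof (cases "tot p D c x < real p")
        case True
        then have "x \<in> N" unfolding N_def Nset_def using ex by blast
        then show ?thesis by blast
      next
        case False
        then have "tot p D c x = real p" using tot_le[of p D c x] by linarith
        then have "x \<in> B" unfolding B_def Bset_def using ex by blast
        then show ?thesis by blast
      qed
    next
      case False
      then show ?thesis using h i unfolding F_def by auto
    qed
  qed
  have NBM: "N \<union> B \<subseteq> {0..<M + 1}"
  proof
    fix x assume "x \<in> N \<union> B"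
    then obtain i where i: "i < n" "act D c i x" unfolding N_def B_def Nset_def Bset_def n_def by auto
    then show "x \<in> {0..<M + 1}" using act_nonneg[OF i(2)] cM[OF i(1)] unfolding act_def by auto
  qed
  have FM: "F \<subseteq> {0..<M + 1}"
  proof
    fix x assume "x \<in> F"
    then obtain i where i: "i < n" "x = av D c i" unfolding F_def by auto
    then show "x \<in> {0..<M + 1}" using av_nonneg[of i] av_lt[of i] cM[OF i(1)] n_def by auto
  qed
  have "awake_time D (mk p D c) = mu (Oset D (mk p D c))" unfolding awake_time_def Oset_def ..
  also have "\<dots> \<le> mu ((N \<union> B) \<union> F)"
  proof (rule mu_mono[OF Wb _ _ W_sub])
    have "finite F" unfolding F_def by simp
    then show "(N \<union> B) \<union> F \<in> sets borel" using Nb Bb fin_borel by blast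
    have "(N \<union> B) \<union> F \<subseteq> {0..<M + 1}" using NBM FM by blast
    then show "bounded ((N \<union> B) \<union> F)" by (rule bnd_Ico)
  qed
  also have "\<dots> \<le> mu (N \<union> B)"
  proof (rule mu_un_fin)
    show "N \<union> B \<in> sets borel" using Nb Bb by blast
    show "finite F" unfolding F_def by simp
  qed
  also have "\<dots> \<le> mu N + mu B" by (rule mu_un[OF Nb Bb])
  finally have W1: "awake_time D (mk p D c) \<le> mu N + mu B" .
  have N1: "mu N \<le> sp * mu OS"
  proof -
    have eqN: "N \<inter> {0..<M + 1} = N" using NBM by auto
    have "mu N = mu (N \<inter> {0..<M + 1})" by (simp only: eqN)
    also have "\<dots> \<le> sp * mu (OS \<inter> {0..<M + 1})" unfolding N_def OS_def sp_def by (rule global_bound[OF vS])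
    also have "\<dots> \<le> sp * mu OS"
    proof (rule mult_left_mono[OF _ sp0])
      have "OS \<subseteq> {0..Max (insert 0 (compl S ` {..<length D}))}" unfolding OS_def by (rule Oset_sub[OF vd])
      then have "bounded OS" by (rule bounded_subset[rotated]) simp
      then show "mu (OS \<inter> {0..<M + 1}) \<le> mu OS" by (intro mu_mono) (use Ob in auto)
    qed
    finally show ?thesis .
  qed
  have B1: "mu B \<le> sp * mu OS" unfolding B_def OS_def sp_def by (rule busy_bound[OF vS])
  have E: "mu OS = awake_time D S" unfolding OS_def awake_time_def Oset_def ..
  have "awake_time D (mk p D c) \<le> sp * mu OS + sp * mu OS" using W1 N1 B1 by linarith
  then show ?thesis unfolding E sp_def by (simp add: algebra_simps)
qed

end

theorem proposition7p2:
  shows "\<exists>C::real. \<forall>p::nat. p \<ge> 1 \<longrightarrow>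
           (\<exists>A. online p A \<and>
                (\<forall>D. valid_dtap p D \<longrightarrow>
                   valid_sched p D (A D) \<and>
                   (\<forall>S. valid_sched p D S \<longrightarrow>
                      awake_time D (A D) \<le> C * sqrt (real p) * awake_time D S)))"
proof (intro exI[of _ 2] allI impI)
  fix p :: nat assume p1: "1 \<le> p"
  show "\<exists>A. online p A \<and>
                (\<forall>D. valid_dtap p D \<longrightarrow>
                   valid_sched p D (A D) \<and>
                   (\<forall>S. valid_sched p D S \<longrightarrow>
                      awake_time D (A D) \<le> 2 * sqrt (real p) * awake_time D S))"
  proof (intro exI[of _ "alg p"] conjI allI impI)
    show "online p (alg p)" by (rule alg_online[OF p1])
  next
    fix D assume vd: "valid_dtap p D"
    show "valid_sched p D (alg p D)" by (rule alg_valid[OF vd p1])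
  next
    fix D S assume vd: "valid_dtap p D" and vS: "valid_sched p D S"
    interpret ctx p D "compl (alg p D)"
    proof
      show "valid_dtap p D" by (rule vd)
      show "1 \<le> p" by (rule p1)
      show "Sol p D (compl (alg p D))" by (rule alg_sol[OF vd p1])
    qed
    have "awake_time D (mk p D (compl (alg p D))) \<le> 2 * sqrt (real p) * awake_time D S"
      by (rule final_bound[OF vS])
    moreover have "alg p D = mk p D (compl (alg p D))" by (rule alg_eq)
    ultimately show "awake_time D (alg p D) \<le> 2 * sqrt (real p) * awake_time D S" by metis
  qed
qed


end
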